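(* Let $(\Omega_1,\dots,\Omega_n)$ be the unique nonempty compact solution of a graph-directed iterated function system (GIFS) on $\mathbb{X}=\mathbb{R}^r\times\mathbb{C}^s\times\mathbb{Q}_{\mathfrak{p}_1}\times\cdots\times\mathbb{Q}_{\mathfrak{p}_k}$, as described below. If $\nu^{(q)}(E^\infty)<\infty$, then $h^{(q)}(\Omega_i)<\infty$ for all $1\le i\le n$. In particular, when the directed graph of the GIFS is strongly connected, $\dim_{\mathrm{Hd}}\Omega_i\le\dim_{\mathrm{aff}}$ for all $1\le i\le n$.
   Context: Let $N=r+2s+k$. Each $\mathbb{Q}_{\mathfrak{p}_j}$ is the completion of an algebraic number field at a nonzero prime ideal, with normalised $\mathfrak{p}$-adic absolute value $\|\cdot\|_{\mathfrak{p}_j}$. $\mathbb{X}$ carries the maximum metric $d_\infty$: the maximum over the absolute differences of the real coordinates, of the real parts and of the imaginary parts of the complex coordinates, and over $\|x_{r+s+j}-y_{r+s+j}\|_{\mathfrak{p}_j}$. The measure $h^{(q)}$ is the $q$-dimensional Hausdorff measure for $d_\infty$, namely $\lim_{\delta\to0}\inf\{\sum\operatorname{diam}(U_i)^q\}$ over countable covers by sets of diameter $\le\delta$. $\dim_{\mathrm{Hd}}$ is the corresponding Hausdorff dimension. $\mathcal{L}'$ is the set of coordinatewise maps $T(x)=(a_1x_1,\dots,a_{r+s+k}x_{r+s+k})$, with $a_m$ in the field of the $m$-th factor. Their singular values are $|a_m|$ for real factors, $|a_m|$ counted twice for complex factors, and $\|a_{r+s+j}\|_{\mathfrak{p}_j}$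 for $\mathfrak{p}$-adic factors, ordered as $\alpha_1\ge\dots\ge\alpha_N$. We require $\alpha_1<1$ and $\alpha_N>0$. The singular value function is $\Phi^0(T)=1$; $\Phi^q(T)=\alpha_1\cdots\alpha_{j-1}\alpha_j^{q-j+1}$ for $j-1<q\le j\le N$; and $\Phi^q(T)=(\alpha_1\cdots\alpha_N)^{q/N}$ for $q>N$. The GIFS is $\Omega_i=\bigcup_{j=1}^n\bigcup_{f\in F_{ij}}f(\Omega_j)$, with finite sets $F_{ij}$ of affine maps $f(x)=T_f(x)+t_f$, $T_f\in\mathcal{L}'$. Its multigraph has one edge $i\to j$ labelled $f$ for each $f\in F_{ij}$. $E^{(\ell)}_{ij}$ denotes the paths of length $\ell$ from $i$ to $j$, $E^{\mathrm{fin}}$ all finite paths, and $E^\infty$ all infinite paths. For $\omega=\omega_1\cdots\omega_\ell$, set $T_\omega=T_{\omega_1}\circ\cdots\circ T_{\omega_\ell}$. $E^\infty$ has the ultrametric $\eta_0^{-|\omega\wedge\varpi|}$ for a fixed $\eta_0>1$, where $\omega\wedge\varpi$ is the longest common prefix, with cylinders $N(\varpi)$. The measure $\nu^{(q)}$ is the Method II measure from $\tau^q(N(\omega))=\Phi^q(T_\omega)$. For a strongly connected graph, the affinity dimension $\dim_{\mathrm{aff}}$ is the common value of $\inf\{q:\sum_{\omega\in E^{\mathrm{fin}}}\Phi^q(T_\omega)<\infty\}$ and $\inf\{q:\nu^{(q)}(E^\infty)=0\}$. It is also the unique $q>0$ with $\lim_\ell\rho([\sum_{\omega\in E^{(\ell)}_{ij}}\Phi^q(T_\omega)]_{i,j})^{1/\ell}=1$,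 where $\rho$ is the spectral radius. *)

theory Defs
  imports "HOL-Analysis.Analysis" "HOL-Algebra.Embedded_Algebras" "HOL-Algebra.Generated_Fields"
begin

text \<open>A p-adic factor is given as a field F (HOL-Algebra record) together with an
absolute value av on its carrier.  is_padic_completion F av says: av is a nontrivial
non-archimedean absolute value, F is complete for it, F has characteristic 0 and
contains a dense subfield K that is finite-dimensional over the prime field
(a number field), so F is the completion of the number field K at the nonzero prime
ideal determined by av (Ostrowski); finally av is normalised: the uniformiser has
absolute value 1/q, q the cardinality of the residue field.\<close>

definition residue_classes :: "('a, 'b) ring_scheme \<Rightarrow> ('a \<Rightarrow> real) \<Rightarrow> 'a set set" where
  "residue_classes F av =
     (let Oint = {x \<in> carrier F. av x \<le> 1}
      in {{y \<in> Oint. av (x \<ominus>\<^bsub>F\<^esub> y) < 1} | x. x \<in> Oint})"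

definition is_padic_completion :: "('a, 'b) ring_scheme \<Rightarrow> ('a \<Rightarrow> real) \<Rightarrow> bool" where
  "is_padic_completion F av \<longleftrightarrow>
     field F
   \<and> (\<forall>x\<in>carrier F. 0 \<le> av x \<and> (av x = 0 \<longleftrightarrow> x = \<zero>\<^bsub>F\<^esub>))
   \<and> (\<forall>x\<in>carrier F. \<forall>y\<in>carrier F. av (x \<otimes>\<^bsub>F\<^esub> y) = av x * av y)
   \<and> (\<forall>x\<in>carrier F. \<forall>y\<in>carrier F. av (x \<oplus>\<^bsub>F\<^esub> y) \<le> max (av x) (av y))
   \<and> (\<exists>x\<in>carrier F. x \<noteq> \<zero>\<^bsub>F\<^esub> \<and> av x \<noteq> 1)
   \<and> (\<forall>n::nat. n > 0 \<longrightarrow> add_pow F n \<one>\<^bsub>F\<^esub> \<noteq> \<zero>\<^bsub>F\<^esub>)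
   \<and> (\<forall>x::nat \<Rightarrow> 'a. (\<forall>m. x m \<in> carrier F) \<and>
         (\<forall>e>0. \<exists>M. \<forall>m\<ge>M. \<forall>m'\<ge>M. av (x m \<ominus>\<^bsub>F\<^esub> x m') < e)
       \<longrightarrow> (\<exists>l\<in>carrier F. (\<lambda>m. av (x m \<ominus>\<^bsub>F\<^esub> l)) \<longlonglongrightarrow> 0))
   \<and> (\<exists>K. subfield K F \<and> ring.finite_dimension F (generate_field F {}) K
         \<and> (\<forall>x\<in>carrier F. \<forall>e>0. \<exists>y\<in>K. av (x \<ominus>\<^bsub>F\<^esub> y) < e))
   \<and> finite (residue_classes F av)
   \<and> (\<exists>p\<in>carrier F. av p < 1 \<and> (\<forall>x\<in>carrier F. av x < 1 \<longrightarrow> av x \<le> av p)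
         \<and> av p = 1 / real (card (residue_classes F av)))"

text \<open>Points are triples of coordinate functions; coordinates outside the index
ranges are fixed (0 resp. undefined), so that points of X correspond bijectively
to elements of Xset.\<close>

type_synonym 'a pt = "(nat \<Rightarrow> real) \<times> (nat \<Rightarrow> complex) \<times> (nat \<Rightarrow> 'a)"

definition Xset :: "nat \<Rightarrow> nat \<Rightarrow> nat \<Rightarrow> (nat \<Rightarrow> 'a ring) \<Rightarrow> 'a pt set" where
  "Xset r s k F = {(xr, xc, xp). (\<forall>i\<ge>r. xr i = 0) \<and> (\<forall>i\<ge>s. xc i = 0)
       \<and> (\<forall>j<k. xp j \<in> carrier (F j)) \<and> (\<forall>j\<ge>k. xp j = undefined)}"

definition dX :: "nat \<Rightarrow> nat \<Rightarrow> nat \<Rightarrow> (nat \<Rightarrow> 'a ring) \<Rightarrow> (nat \<Rightarrow> 'a \<Rightarrow> real)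
                  \<Rightarrow> 'a pt \<Rightarrow> 'a pt \<Rightarrow> real" where
  "dX r s k F av x y = (case x of (xr, xc, xp) \<Rightarrow> case y of (yr, yc, yp) \<Rightarrow>
     Max ({0} \<union> {\<bar>xr i - yr i\<bar> | i. i < r}
              \<union> {\<bar>Re (xc i - yc i)\<bar> | i. i < s} \<union> {\<bar>Im (xc i - yc i)\<bar> | i. i < s}
              \<union> {av j (xp j \<ominus>\<^bsub>F j\<^esub> yp j) | j. j < k}))"

definition diam_set :: "('p \<Rightarrow> 'p \<Rightarrow> real) \<Rightarrow> 'p set \<Rightarrow> real" where
  "diam_set d U = (if U = {} then 0 else Sup {d x y | x y. x \<in> U \<and> y \<in> U})"

definition diam_pow :: "('p \<Rightarrow> 'p \<Rightarrow> real) \<Rightarrow> 'p set \<Rightarrow> real \<Rightarrow> real" where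
  "diam_pow d U q = (if U = {} then 0 else if q = 0 then 1 else diam_set d U powr q)"

definition hausdorff :: "nat \<Rightarrow> nat \<Rightarrow> nat \<Rightarrow> (nat \<Rightarrow> 'a ring) \<Rightarrow> (nat \<Rightarrow> 'a \<Rightarrow> real)
                         \<Rightarrow> real \<Rightarrow> 'a pt set \<Rightarrow> ennreal" where
  "hausdorff r s k F av q A =
     (SUP \<delta>\<in>{0<..}. INF U \<in> {U :: nat \<Rightarrow> 'a pt set.
          (\<forall>i. U i \<subseteq> Xset r s k F \<and> (\<forall>x\<in>U i. \<forall>y\<in>U i. dX r s k F av x y \<le> \<delta>))
          \<and> A \<subseteq> (\<Union>i. U i)}.
        (\<Sum>i. ennreal (diam_pow (dX r s k F av) (U i) q)))"

definition dim_Hd :: "nat \<Rightarrow> nat \<Rightarrow> nat \<Rightarrow> (nat \<Rightarrow> 'a ring) \<Rightarrow> (nat \<Rightarrow> 'a \<Rightarrow> real)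
                      \<Rightarrow> 'a pt set \<Rightarrow> ereal" where
  "dim_Hd r s k F av A = Inf {ereal q | q. q \<ge> 0 \<and> hausdorff r s k F av q A = 0}"

definition dcompact :: "nat \<Rightarrow> nat \<Rightarrow> nat \<Rightarrow> (nat \<Rightarrow> 'a ring) \<Rightarrow> (nat \<Rightarrow> 'a \<Rightarrow> real)
                        \<Rightarrow> 'a pt set \<Rightarrow> bool" where
  "dcompact r s k F av S \<longleftrightarrow> S \<subseteq> Xset r s k F \<and>
     (\<forall>x :: nat \<Rightarrow> 'a pt. (\<forall>m. x m \<in> S) \<longrightarrow>
        (\<exists>l\<in>S. \<exists>\<sigma>. strict_mono \<sigma> \<and> (\<lambda>m. dX r s k F av (x (\<sigma> m)) l) \<longlonglongrightarrow> 0))"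

text \<open>A coordinatewise linear map T(x) = (a_1 x_1, ...) is represented by its
coefficient point a; an affine map f = T_f + t_f by the pair (a, t).\<close>

definition lin_ok :: "nat \<Rightarrow> nat \<Rightarrow> nat \<Rightarrow> (nat \<Rightarrow> 'a ring) \<Rightarrow> (nat \<Rightarrow> 'a \<Rightarrow> real)
                      \<Rightarrow> 'a pt \<Rightarrow> bool" where
  "lin_ok r s k F av a \<longleftrightarrow> a \<in> Xset r s k F \<and>
     (case a of (ar, ac, ap) \<Rightarrow>
        (\<forall>i<r. 0 < \<bar>ar i\<bar> \<and> \<bar>ar i\<bar> < 1) \<and> (\<forall>i<s. 0 < cmod (ac i) \<and> cmod (ac i) < 1)
      \<and> (\<forall>j<k. 0 < av j (ap j) \<and> av j (ap j) < 1))"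

definition lin_apply :: "nat \<Rightarrow> (nat \<Rightarrow> 'a ring) \<Rightarrow> 'a pt \<Rightarrow> 'a pt \<Rightarrow> 'a pt" where
  "lin_apply k F a x = (case a of (ar, ac, ap) \<Rightarrow> case x of (xr, xc, xp) \<Rightarrow>
     (\<lambda>i. ar i * xr i, \<lambda>i. ac i * xc i,
      \<lambda>j. if j < k then ap j \<otimes>\<^bsub>F j\<^esub> xp j else undefined))"

definition aff_apply :: "nat \<Rightarrow> (nat \<Rightarrow> 'a ring) \<Rightarrow> 'a pt \<times> 'a pt \<Rightarrow> 'a pt \<Rightarrow> 'a pt" where
  "aff_apply k F f x = (case lin_apply k F (fst f) x of (yr, yc, yp) \<Rightarrow>
     case snd f of (tr, tc, tp) \<Rightarrow>
     (\<lambda>i. yr i + tr i, \<lambda>i. yc i + tc i,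
      \<lambda>j. if j < k then yp j \<oplus>\<^bsub>F j\<^esub> tp j else undefined))"

definition lin_id :: "nat \<Rightarrow> nat \<Rightarrow> nat \<Rightarrow> (nat \<Rightarrow> 'a ring) \<Rightarrow> 'a pt" where
  "lin_id r s k F = (\<lambda>i. if i < r then 1 else 0, \<lambda>i. if i < s then 1 else 0,
                     \<lambda>j. if j < k then \<one>\<^bsub>F j\<^esub> else undefined)"

definition lin_comp :: "nat \<Rightarrow> (nat \<Rightarrow> 'a ring) \<Rightarrow> 'a pt \<Rightarrow> 'a pt \<Rightarrow> 'a pt" where
  "lin_comp k F a b = lin_apply k F a b"

definition sing_vals :: "nat \<Rightarrow> nat \<Rightarrow> nat \<Rightarrow> (nat \<Rightarrow> 'a \<Rightarrow> real) \<Rightarrow> 'a pt \<Rightarrow> real list" where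
  "sing_vals r s k av a = (case a of (ar, ac, ap) \<Rightarrow>
     rev (sort (map (\<lambda>i. \<bar>ar i\<bar>) [0..<r]
                @ concat (map (\<lambda>i. [cmod (ac i), cmod (ac i)]) [0..<s])
                @ map (\<lambda>j. av j (ap j)) [0..<k])))"

definition Phi :: "nat \<Rightarrow> nat \<Rightarrow> nat \<Rightarrow> (nat \<Rightarrow> 'a \<Rightarrow> real) \<Rightarrow> real \<Rightarrow> 'a pt \<Rightarrow> real" where
  "Phi r s k av q a =
     (let \<alpha> = sing_vals r s k av a; N = length \<alpha> in
      if q = 0 then 1
      else if q \<le> real N then
        (let j = nat \<lceil>q\<rceil> in (\<Prod>m<j - 1. \<alpha> ! m) * (\<alpha> ! (j - 1)) powr (q - real j + 1))
      else (\<Prod>m<N. \<alpha> ! m) powr (q / real N))"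

text \<open>Vertices are 0..n-1; G i j is the finite set F_ij of affine maps.
An edge is a triple (i, j, f) with f in G i j, directed i \<rightarrow> j.\<close>

type_synonym 'a edge = "nat \<times> nat \<times> ('a pt \<times> 'a pt)"

definition edges :: "nat \<Rightarrow> (nat \<Rightarrow> nat \<Rightarrow> ('a pt \<times> 'a pt) set) \<Rightarrow> 'a edge set" where
  "edges n G = {(i, j, f). i < n \<and> j < n \<and> f \<in> G i j}"

definition esrc :: "'a edge \<Rightarrow> nat" where "esrc e = fst e"
definition etgt :: "'a edge \<Rightarrow> nat" where "etgt e = fst (snd e)"
definition elab :: "'a edge \<Rightarrow> 'a pt \<times> 'a pt" where "elab e = snd (snd e)"

definition Efin :: "nat \<Rightarrow> (nat \<Rightarrow> nat \<Rightarrow> ('a pt \<times> 'a pt) set) \<Rightarrow> 'a edge list set" where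
  "Efin n G = {w. set w \<subseteq> edges n G \<and>
                 (\<forall>m. Suc m < length w \<longrightarrow> etgt (w ! m) = esrc (w ! Suc m))}"

definition Epaths :: "nat \<Rightarrow> (nat \<Rightarrow> nat \<Rightarrow> ('a pt \<times> 'a pt) set) \<Rightarrow> nat \<Rightarrow> nat \<Rightarrow> nat
                      \<Rightarrow> 'a edge list set" where
  "Epaths n G l i j = {w \<in> Efin n G. length w = l \<and> l > 0 \<and>
                         esrc (hd w) = i \<and> etgt (last w) = j}"

definition Einf :: "nat \<Rightarrow> (nat \<Rightarrow> nat \<Rightarrow> ('a pt \<times> 'a pt) set) \<Rightarrow> (nat \<Rightarrow> 'a edge) set" where
  "Einf n G = {w. (\<forall>m. w m \<in> edges n G) \<and> (\<forall>m. etgt (w m) = esrc (w (Suc m)))}"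

definition T_path :: "nat \<Rightarrow> nat \<Rightarrow> nat \<Rightarrow> (nat \<Rightarrow> 'a ring) \<Rightarrow> 'a edge list \<Rightarrow> 'a pt" where
  "T_path r s k F w = foldr (\<lambda>e b. lin_comp k F (fst (elab e)) b) w (lin_id r s k F)"

definition cyl :: "nat \<Rightarrow> (nat \<Rightarrow> nat \<Rightarrow> ('a pt \<times> 'a pt) set) \<Rightarrow> 'a edge list
                   \<Rightarrow> (nat \<Rightarrow> 'a edge) set" where
  "cyl n G w = {\<omega> \<in> Einf n G. \<forall>m<length w. \<omega> m = w ! m}"

definition dE :: "real \<Rightarrow> (nat \<Rightarrow> 'a edge) \<Rightarrow> (nat \<Rightarrow> 'a edge) \<Rightarrow> real" where
  "dE \<eta>0 \<omega> \<omega>' = (if \<omega> = \<omega>' then 0 else \<eta>0 powr (- real (LEAST m. \<omega> m \<noteq> \<omega>' m)))"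

definition nu :: "nat \<Rightarrow> nat \<Rightarrow> nat \<Rightarrow> (nat \<Rightarrow> 'a ring) \<Rightarrow> (nat \<Rightarrow> 'a \<Rightarrow> real) \<Rightarrow> nat
                  \<Rightarrow> (nat \<Rightarrow> nat \<Rightarrow> ('a pt \<times> 'a pt) set) \<Rightarrow> real \<Rightarrow> real
                  \<Rightarrow> (nat \<Rightarrow> 'a edge) set \<Rightarrow> ennreal" where
  "nu r s k F av n G \<eta>0 q A =
     (SUP \<delta>\<in>{0<..}. INF c \<in> {c :: nat \<Rightarrow> 'a edge list.
          (\<forall>i. c i \<in> Efin n G \<and> diam_set (dE \<eta>0) (cyl n G (c i)) \<le> \<delta>)
          \<and> A \<subseteq> (\<Union>i. cyl n G (c i))}.
        (\<Sum>i. ennreal (Phi r s k av q (T_path r s k F (c i)))))"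

definition dim_aff :: "nat \<Rightarrow> nat \<Rightarrow> nat \<Rightarrow> (nat \<Rightarrow> 'a ring) \<Rightarrow> (nat \<Rightarrow> 'a \<Rightarrow> real) \<Rightarrow> nat
                       \<Rightarrow> (nat \<Rightarrow> nat \<Rightarrow> ('a pt \<times> 'a pt) set) \<Rightarrow> ereal" where
  "dim_aff r s k F av n G =
     Inf {ereal q | q. q \<ge> 0 \<and>
            (\<Sum>\<^sub>\<infinity>w\<in>Efin n G. ennreal (Phi r s k av q (T_path r s k F w))) < \<infinity>}"

definition strongly_connected :: "nat \<Rightarrow> (nat \<Rightarrow> nat \<Rightarrow> ('a pt \<times> 'a pt) set) \<Rightarrow> bool" where
  "strongly_connected n G \<longleftrightarrow> (\<forall>i<n. \<forall>j<n. \<exists>l. Epaths n G l i j \<noteq> {})"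

end

theory Submission
  imports Defs
begin

lemma (in cring) diff_aff: "\<lbrakk>a \<in> carrier R; u \<in> carrier R; v \<in> carrier R; t \<in> carrier R\<rbrakk> \<Longrightarrow> (a \<otimes> u \<oplus> t) \<ominus> (a \<otimes> v \<oplus> t) = a \<otimes> (u \<ominus> v)"
  by algebra
lemma (in cring) diff_scal: "\<lbrakk>a \<in> carrier R; y \<in> carrier R; y' \<in> carrier R; c \<in> carrier R\<rbrakk> \<Longrightarrow> a \<otimes> (y \<ominus> c) \<ominus> a \<otimes> (y' \<ominus> c) = a \<otimes> (y \<ominus> y')"
  by algebra
lemma (in cring) diff_mul: "\<lbrakk>a \<in> carrier R; y \<in> carrier R; y' \<in> carrier R\<rbrakk> \<Longrightarrow> a \<otimes> y \<ominus> a \<otimes> y' = a \<otimes> (y \<ominus> y')"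
  by algebra

locale padic = field F for F (structure) + fixes av :: "'a \<Rightarrow> real"
  assumes pc: "is_padic_completion F av"
begin

lemma av_nn: "x \<in> carrier F \<Longrightarrow> 0 \<le> av x"
  using pc unfolding is_padic_completion_def by blast
lemma av_0_iff: "x \<in> carrier F \<Longrightarrow> av x = 0 \<longleftrightarrow> x = \<zero>"
  using pc unfolding is_padic_completion_def by blast
lemma av_mult: "x \<in> carrier F \<Longrightarrow> y \<in> carrier F \<Longrightarrow> av (x \<otimes> y) = av x * av y"
  using pc unfolding is_padic_completion_def by blast
lemma av_ultra: "x \<in> carrier F \<Longrightarrow> y \<in> carrier F \<Longrightarrow> av (x \<oplus> y) \<le> max (av x) (av y)"
  using pc unfolding is_padic_completion_def by blast

lemma av_zero[simp]: "av \<zero> = 0" using av_0_iff by simp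

lemma av_one[simp]: "av \<one> = 1"
proof -
  have "av \<one> = av \<one> * av \<one>" using av_mult[of \<one> \<one>] by simp
  moreover have "av \<one> \<noteq> 0" using av_0_iff[of \<one>] by simp
  ultimately show ?thesis by (metis mult_cancel_right1)
qed

lemma av_neg_one: "av (\<ominus> \<one>) = 1"
proof -
  have e: "\<ominus> \<one> \<otimes> \<ominus> \<one> = \<one>" by algebra
  have "av (\<ominus> \<one>) * av (\<ominus> \<one>) = 1" using av_mult[of "\<ominus> \<one>" "\<ominus> \<one>"] e by simp
  moreover have "0 \<le> av (\<ominus> \<one>)" using av_nn by simp
  ultimately show ?thesis by (metis abs_of_nonneg abs_square_eq_1 power2_eq_square)
qed

lemma av_uminus: "x \<in> carrier F \<Longrightarrow> av (\<ominus> x) = av x"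
proof -
  assume x: "x \<in> carrier F"
  have "\<ominus> x = \<ominus> \<one> \<otimes> x" using x by (simp add: l_minus)
  then show ?thesis using x av_mult[of "\<ominus> \<one>" x] av_neg_one by simp
qed

lemma av_minus_le: "x \<in> carrier F \<Longrightarrow> y \<in> carrier F \<Longrightarrow> av (x \<ominus> y) \<le> max (av x) (av y)"
  unfolding a_minus_def using av_ultra[of x "\<ominus> y"] av_uminus[of y] by simp

lemma av_minus_sym: "x \<in> carrier F \<Longrightarrow> y \<in> carrier F \<Longrightarrow> av (x \<ominus> y) = av (y \<ominus> x)"
proof -
  assume a: "x \<in> carrier F" "y \<in> carrier F"
  have "y \<ominus> x = \<ominus> (x \<ominus> y)" using a by algebra
  then show ?thesis using a av_uminus[of "x \<ominus> y"] by simp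
qed

lemma av_inv: "x \<in> carrier F \<Longrightarrow> x \<noteq> \<zero> \<Longrightarrow> av (inv x) = 1 / av x"
proof -
  assume x: "x \<in> carrier F" "x \<noteq> \<zero>"
  have u: "x \<in> Units F" using x field_Units by auto
  have "av (x \<otimes> inv x) = 1" using u by simp
  then have "av x * av (inv x) = 1" using av_mult[OF x(1) Units_inv_closed[OF u]] by simp
  moreover have "av x \<noteq> 0" using av_0_iff x by simp
  ultimately show ?thesis by (simp add: field_simps)
qed

definition Qc :: nat where "Qc = card (residue_classes F av)"

lemma RC_fin: "finite (residue_classes F av)"
  using pc unfolding is_padic_completion_def by blast

lemma unif: "\<exists>p\<in>carrier F. av p < 1 \<and> (\<forall>x\<in>carrier F. av x < 1 \<longrightarrow> av x \<le> av p) \<and> av p = 1 / real Qc"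
  using pc unfolding is_padic_completion_def Qc_def by blast

definition pi :: 'a where "pi = (SOME p. p\<in>carrier F \<and> av p < 1 \<and> (\<forall>x\<in>carrier F. av x < 1 \<longrightarrow> av x \<le> av p) \<and> av p = 1 / real Qc)"

lemma pi_props: "pi \<in> carrier F" "av pi < 1" "\<And>x. x\<in>carrier F \<Longrightarrow> av x < 1 \<Longrightarrow> av x \<le> av pi" "av pi = 1 / real Qc"
  using someI_ex[OF unif[unfolded Bex_def]] unfolding pi_def[symmetric] by auto

lemma Qc_ge2: "Qc \<ge> 2"
proof -
  have "\<zero> \<in> {x \<in> carrier F. av x \<le> 1}" by simp
  then have "{y \<in> {x \<in> carrier F. av x \<le> 1}. av (\<zero> \<ominus> y) < 1} \<in> residue_classes F av"
    unfolding residue_classes_def Let_def by blast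
  then have "residue_classes F av \<noteq> {}" by blast
  then have "Qc \<ge> 1" using RC_fin unfolding Qc_def by (simp add: Suc_leI card_gt_0_iff)
  moreover have "Qc \<noteq> 1" using pi_props(2,4) by auto
  ultimately show ?thesis by simp
qed

lemma pi_nz: "pi \<noteq> \<zero>" using pi_props(4) Qc_ge2 by auto

lemma av_pi_pos: "av pi > 0" using pi_props(4) Qc_ge2 by simp

lemma av_pow: "x \<in> carrier F \<Longrightarrow> av (x [^] (m::nat)) = av x ^ m"
  by (induction m) (simp_all add: av_mult)

lemma digits:
  "\<exists>g::'a \<Rightarrow> nat. (\<forall>y\<in>carrier F. av y \<le> 1 \<longrightarrow> g y < Qc ^ M) \<and>
     (\<forall>y\<in>carrier F. \<forall>y'\<in>carrier F. av y \<le> 1 \<longrightarrow> av y' \<le> 1 \<longrightarrow> g y = g y' \<longrightarrow> av (y \<ominus> y') \<le> (1 / real Qc) ^ M)"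
proof (induction M)
  case 0
  show ?case
    by (rule exI[of _ "\<lambda>_. 0"]) (auto dest: av_minus_le)
next
  case (Suc M)
  then obtain g where g1: "\<And>y. y\<in>carrier F \<Longrightarrow> av y \<le> 1 \<Longrightarrow> g y < Qc ^ M"
    and g2: "\<And>y y'. y\<in>carrier F \<Longrightarrow> y'\<in>carrier F \<Longrightarrow> av y \<le> 1 \<Longrightarrow> av y' \<le> 1 \<Longrightarrow> g y = g y' \<Longrightarrow> av (y \<ominus> y') \<le> (1 / real Qc) ^ M"
    by blast
  define RC where "RC = residue_classes F av"
  obtain e where e: "bij_betw e RC {0..<Qc}"
    using ex_bij_betw_finite_nat[OF RC_fin] unfolding RC_def Qc_def by blast
  define cls where "cls y = {y' \<in> {x \<in> carrier F. av x \<le> 1}. av (y \<ominus> y') < 1}" for y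
  define c where "c y = (SOME z. z \<in> cls y)" for y
  define u where "u y = inv pi \<otimes> (y \<ominus> c y)" for y
  have Q0: "Qc > 0" using Qc_ge2 by simp
  have ipi: "inv pi \<in> carrier F" using pi_nz pi_props(1) field_Units by auto
  have avipi: "av (inv pi) = real Qc" using av_inv[OF pi_props(1) pi_nz] pi_props(4) by simp
  have cls_in: "cls y \<in> RC" if "y \<in> carrier F" "av y \<le> 1" for y
    using that unfolding RC_def residue_classes_def Let_def cls_def by blast
  have y_in: "y \<in> cls y" if "y \<in> carrier F" "av y \<le> 1" for y
  proof -
    have "y \<ominus> y = \<zero>" using that by algebra
    then have "av (y \<ominus> y) < 1" by (metis av_zero zero_less_one)
    then show ?thesis using that unfolding cls_def by simp
  qed
  have c_in: "c y \<in> cls y" if "y \<in> carrier F" "av y \<le> 1" for y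
    unfolding c_def using y_in[OF that] by (rule someI)
  have c_car: "c y \<in> carrier F" and c_diff: "av (y \<ominus> c y) < 1"
    if "y \<in> carrier F" "av y \<le> 1" for y
    using c_in[OF that] unfolding cls_def by auto
  have u_car: "u y \<in> carrier F" if "y \<in> carrier F" "av y \<le> 1" for y
    using c_car[OF that] that ipi unfolding u_def by simp
  have u_av: "av (u y) \<le> 1" if "y \<in> carrier F" "av y \<le> 1" for y
  proof -
    have d: "y \<ominus> c y \<in> carrier F" using c_car[OF that] that by simp
    have "av (y \<ominus> c y) \<le> 1 / real Qc" using pi_props(3)[OF d c_diff[OF that]] pi_props(4) by simp
    then have "real Qc * av (y \<ominus> c y) \<le> 1" using Q0 by (simp add: field_simps)
    then show ?thesis unfolding u_def using av_mult[OF ipi d] avipi by simp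
  qed
  define g' where "g' y = e (cls y) + Qc * g (u y)" for y
  show ?case
  proof (rule exI[of _ g'], intro conjI ballI impI)
    fix y assume y: "y \<in> carrier F" "av y \<le> 1"
    have "e (cls y) < Qc" using e cls_in[OF y] by (auto dest: bij_betw_apply)
    moreover have "g (u y) < Qc ^ M" using g1 u_car[OF y] u_av[OF y] by blast
    then have "Suc (g (u y)) \<le> Qc ^ M" by simp
    then have "Qc * Suc (g (u y)) \<le> Qc * Qc ^ M" by (rule mult_le_mono2)
    with \<open>e (cls y) < Qc\<close> show "g' y < Qc ^ Suc M" unfolding g'_def by simp
  next
    fix y y' assume y: "y \<in> carrier F" and y': "y' \<in> carrier F" and a: "av y \<le> 1" "av y' \<le> 1" and eq: "g' y = g' y'"
    have ey: "e (cls y) < Qc" using e cls_in[OF y a(1)] by (auto dest: bij_betw_apply)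
    have ey': "e (cls y') < Qc" using e cls_in[OF y' a(2)] by (auto dest: bij_betw_apply)
    have m1: "e (cls y) = e (cls y')"
      using eq ey ey' unfolding g'_def by (metis mod_mult_self2 mod_less)
    then have m2: "g (u y) = g (u y')"
      using eq Q0 unfolding g'_def by simp
    have "cls y = cls y'" using m1 e cls_in[OF y a(1)] cls_in[OF y' a(2)]
      unfolding bij_betw_def inj_on_def by blast
    then have cc: "c y = c y'" unfolding c_def by simp
    have "av (u y \<ominus> u y') \<le> (1 / real Qc) ^ M"
      using g2[OF u_car[OF y a(1)] u_car[OF y' a(2)] u_av[OF y a(1)] u_av[OF y' a(2)] m2] .
    moreover have "u y \<ominus> u y' = inv pi \<otimes> (y \<ominus> y')"
      unfolding u_def cc using diff_scal[OF ipi y y' c_car[OF y' a(2)]] .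
    ultimately have "real Qc * av (y \<ominus> y') \<le> (1 / real Qc) ^ M"
      using av_mult[OF ipi] y y' avipi by simp
    then show "av (y \<ominus> y') \<le> (1 / real Qc) ^ Suc M"
      using Q0 by (simp add: field_simps power_Suc)
  qed
qed

end

lemma pow_choice:
  fixes x Q :: real
  assumes "x > 0" "Q > 1"
  shows "\<exists>M::nat. x \<le> Q ^ M \<and> Q ^ M \<le> Q * max 1 x"
proof (cases "x \<le> 1")
  case True then show ?thesis using assms by (intro exI[of _ 0]) auto
next
  case False
  obtain M0 where M0: "x < Q ^ M0" using real_arch_pow[OF assms(2)] by blast
  obtain M where M: "M \<le> M0" "\<forall>i<M. \<not> x \<le> Q ^ i" "x \<le> Q ^ M"
    using ex_least_nat_le[of "\<lambda>i. x \<le> Q ^ i" M0] M0 False by auto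
  have "M > 0" using M False by (cases M) auto
  then have "M - 1 < M" by simp
  then have "\<not> x \<le> Q ^ (M - 1)" using M(2) by blast
  then have "Q ^ (M - 1) < x" by simp
  then have "Q * Q ^ (M - 1) \<le> Q * x" using assms by (intro mult_left_mono) auto
  moreover have "Q * Q ^ (M - 1) = Q ^ M" using \<open>M > 0\<close> by (simp add: power_eq_if)
  ultimately have "Q ^ M \<le> Q * max 1 x" using False by simp
  then show ?thesis using M(3) by blast
qed

lemma real_index:
  fixes D :: real
  assumes "D \<ge> 0"
  shows "\<exists>C\<ge>1. \<forall>\<alpha>>0. \<forall>\<beta>>0. \<exists>g::real \<Rightarrow> int. \<exists>R. finite R \<and> real (card R) \<le> C * max 1 (\<alpha>/\<beta>)
      \<and> (\<forall>y. \<bar>y\<bar> \<le> D \<longrightarrow> g y \<in> R) \<and> (\<forall>y y'. g y = g y' \<longrightarrow> \<alpha> * \<bar>y - y'\<bar> \<le> \<beta>)"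
proof (rule exI[of _ "2 * D + 2"], intro conjI allI impI)
  show "1 \<le> 2 * D + 2" using assms by simp
  fix \<alpha> \<beta> :: real assume a: "\<alpha> > 0" and b: "\<beta> > 0"
  define g where "g y = \<lfloor>y * \<alpha> / \<beta>\<rfloor>" for y
  define R where "R = {\<lfloor>- D * \<alpha> / \<beta>\<rfloor>..\<lfloor>D * \<alpha> / \<beta>\<rfloor>}"
  show "\<exists>g::real \<Rightarrow> int. \<exists>R. finite R \<and> real (card R) \<le> (2 * D + 2) * max 1 (\<alpha>/\<beta>)
      \<and> (\<forall>y. \<bar>y\<bar> \<le> D \<longrightarrow> g y \<in> R) \<and> (\<forall>y y'. g y = g y' \<longrightarrow> \<alpha> * \<bar>y - y'\<bar> \<le> \<beta>)"
  proof (intro exI[of _ g] exI[of _ R] conjI allI impI)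
    show "finite R" unfolding R_def by simp
    have fm: "\<lfloor>- D * \<alpha> / \<beta>\<rfloor> \<le> \<lfloor>D * \<alpha> / \<beta>\<rfloor>"
      using assms a b by (intro floor_mono) (simp add: divide_right_mono mult_right_mono)
    have "real (card R) \<le> real_of_int (\<lfloor>D * \<alpha> / \<beta>\<rfloor> - \<lfloor>- D * \<alpha> / \<beta>\<rfloor> + 1)"
      unfolding R_def using fm by simp
    also have "\<dots> \<le> 2 * (D * \<alpha> / \<beta>) + 2"
    proof -
      have "real_of_int \<lfloor>D * \<alpha> / \<beta>\<rfloor> \<le> D * \<alpha> / \<beta>" by (rule of_int_floor_le)
      moreover have "- D * \<alpha> / \<beta> - 1 < real_of_int \<lfloor>- D * \<alpha> / \<beta>\<rfloor>" by linarith
      moreover have "- D * \<alpha> / \<beta> = - (D * \<alpha> / \<beta>)" by simp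
      ultimately show ?thesis by linarith
    qed
    also have "\<dots> \<le> (2 * D + 2) * max 1 (\<alpha>/\<beta>)"
    proof -
      have "D * \<alpha> / \<beta> = D * (\<alpha>/\<beta>)" by simp
      also have "\<dots> \<le> D * max 1 (\<alpha>/\<beta>)" using assms by (intro mult_left_mono) auto
      finally have "D * \<alpha> / \<beta> \<le> D * max 1 (\<alpha>/\<beta>)" .
      moreover have "1 \<le> max 1 (\<alpha>/\<beta>)" by simp
      ultimately show ?thesis by (simp add: distrib_right)
    qed
    finally show "real (card R) \<le> (2 * D + 2) * max 1 (\<alpha>/\<beta>)" .
  next
    fix y :: real assume "\<bar>y\<bar> \<le> D"
    then have "(- D) * (\<alpha> / \<beta>) \<le> y * (\<alpha> / \<beta>)" "y * (\<alpha> / \<beta>) \<le> D * (\<alpha> / \<beta>)"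
      using a b by (intro mult_right_mono; simp)+
    then have "- D * \<alpha> / \<beta> \<le> y * \<alpha> / \<beta>" "y * \<alpha> / \<beta> \<le> D * \<alpha> / \<beta>" by simp_all
    then show "g y \<in> R" unfolding g_def R_def by (simp add: floor_mono)
  next
    fix y y' :: real assume "g y = g y'"
    moreover have "of_int (g y) \<le> y * \<alpha> / \<beta>" "y * \<alpha> / \<beta> < of_int (g y) + 1"
      "of_int (g y') \<le> y' * \<alpha> / \<beta>" "y' * \<alpha> / \<beta> < of_int (g y') + 1"
      unfolding g_def by linarith+
    ultimately have "\<bar>y * \<alpha> / \<beta> - y' * \<alpha> / \<beta>\<bar> < 1" by (simp add: abs_less_iff)
    then have "\<bar>(y - y') * \<alpha>\<bar> / \<beta> < 1" using b by (simp add: diff_divide_distrib[symmetric] left_diff_distrib)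
    then have "\<bar>(y - y') * \<alpha>\<bar> < \<beta>" using b by simp
    then show "\<alpha> * \<bar>y - y'\<bar> \<le> \<beta>" using a by (simp add: abs_mult mult.commute)
  qed
qed

context padic begin

lemma padic_index:
  fixes D :: real
  assumes "D \<ge> 0"
  shows "\<exists>C\<ge>1. \<forall>\<alpha>>0. \<forall>\<beta>>0. \<exists>g::'a \<Rightarrow> nat. \<exists>K::nat. real K \<le> C * max 1 (\<alpha>/\<beta>)
      \<and> (\<forall>y\<in>carrier F. av y \<le> D \<longrightarrow> g y < K)
      \<and> (\<forall>y\<in>carrier F. \<forall>y'\<in>carrier F. av y \<le> D \<longrightarrow> av y' \<le> D \<longrightarrow> g y = g y' \<longrightarrow> \<alpha> * av (y \<ominus> y') \<le> \<beta>)"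
proof -
  define Q where "Q = real Qc"
  have Q1: "Q > 1" using Qc_ge2 unfolding Q_def by simp
  obtain M0 where M0: "D < Q ^ M0" using real_arch_pow[OF Q1] by blast
  define z where "z = pi [^] M0"
  have zc: "z \<in> carrier F" unfolding z_def using pi_props(1) by simp
  have avz: "av z = (1 / Q) ^ M0" unfolding z_def Q_def using av_pow[OF pi_props(1)] pi_props(4) by simp
  show ?thesis
  proof (rule exI[of _ "Q * Q ^ M0"], intro conjI allI impI)
    show "1 \<le> Q * Q ^ M0" using Q1 by (simp add: one_le_power order.trans[OF _ mult_right_mono[of 1 Q]])
    fix \<alpha> \<beta> :: real assume a: "\<alpha> > 0" and b: "\<beta> > 0"
    obtain M where M: "\<alpha> * Q ^ M0 / \<beta> \<le> Q ^ M" "Q ^ M \<le> Q * max 1 (\<alpha> * Q ^ M0 / \<beta>)"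
      using pow_choice[of "\<alpha> * Q ^ M0 / \<beta>" Q] a b Q1 by auto
    obtain gd where gd1: "\<And>y. y\<in>carrier F \<Longrightarrow> av y \<le> 1 \<Longrightarrow> gd y < Qc ^ M"
      and gd2: "\<And>y y'. y\<in>carrier F \<Longrightarrow> y'\<in>carrier F \<Longrightarrow> av y \<le> 1 \<Longrightarrow> av y' \<le> 1 \<Longrightarrow> gd y = gd y' \<Longrightarrow> av (y \<ominus> y') \<le> (1 / real Qc) ^ M"
      using digits[of M] by blast
    have zy: "av (z \<otimes> y) \<le> 1" if "y \<in> carrier F" "av y \<le> D" for y
    proof -
      have "av (z \<otimes> y) = (1/Q)^M0 * av y" using av_mult[OF zc that(1)] avz by simp
      also have "\<dots> \<le> (1/Q)^M0 * Q ^ M0" using that M0 Q1 by (intro mult_left_mono) auto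
      also have "\<dots> = 1" using Q1 by (simp add: power_divide)
      finally show ?thesis .
    qed
    show "\<exists>g::'a \<Rightarrow> nat. \<exists>K::nat. real K \<le> Q * Q ^ M0 * max 1 (\<alpha>/\<beta>)
      \<and> (\<forall>y\<in>carrier F. av y \<le> D \<longrightarrow> g y < K)
      \<and> (\<forall>y\<in>carrier F. \<forall>y'\<in>carrier F. av y \<le> D \<longrightarrow> av y' \<le> D \<longrightarrow> g y = g y' \<longrightarrow> \<alpha> * av (y \<ominus> y') \<le> \<beta>)"
    proof (intro exI[of _ "\<lambda>y. gd (z \<otimes> y)"] exI[of _ "Qc ^ M"] conjI ballI impI)
      have "real (Qc ^ M) = Q ^ M" unfolding Q_def by simp
      also have "\<dots> \<le> Q * max 1 (\<alpha> * Q ^ M0 / \<beta>)" by (rule M(2))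
      also have "\<dots> \<le> Q * (Q ^ M0 * max 1 (\<alpha> / \<beta>))"
      proof -
        have q0: "1 \<le> Q ^ M0" using Q1 by simp
        have "\<alpha> * Q ^ M0 / \<beta> = Q ^ M0 * (\<alpha> / \<beta>)" by simp
        also have "\<dots> \<le> Q ^ M0 * max 1 (\<alpha> / \<beta>)" using q0 by (intro mult_left_mono) auto
        finally have h1: "\<alpha> * Q ^ M0 / \<beta> \<le> Q ^ M0 * max 1 (\<alpha> / \<beta>)" .
        have h2: "1 \<le> Q ^ M0 * max 1 (\<alpha> / \<beta>)"
        proof -
          have "1 * 1 \<le> Q ^ M0 * max 1 (\<alpha> / \<beta>)" using q0 by (intro mult_mono) auto
          then show ?thesis by simp
        qed
        have "max 1 (\<alpha> * Q ^ M0 / \<beta>) \<le> Q ^ M0 * max 1 (\<alpha> / \<beta>)"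
          using h1 h2 by simp
        then show ?thesis using Q1 by simp
      qed
      finally show "real (Qc ^ M) \<le> Q * Q ^ M0 * max 1 (\<alpha>/\<beta>)" by (simp add: mult.assoc)
    next
      fix y assume "y \<in> carrier F" "av y \<le> D"
      then show "gd (z \<otimes> y) < Qc ^ M" using gd1 zy zc by simp
    next
      fix y y' assume y: "y \<in> carrier F" and y': "y' \<in> carrier F" and d: "av y \<le> D" "av y' \<le> D"
        and e: "gd (z \<otimes> y) = gd (z \<otimes> y')"
      have "av (z \<otimes> y \<ominus> z \<otimes> y') \<le> (1 / Q) ^ M"
        using gd2[OF _ _ zy[OF y d(1)] zy[OF y' d(2)] e] zc y y' unfolding Q_def by simp
      moreover have "z \<otimes> y \<ominus> z \<otimes> y' = z \<otimes> (y \<ominus> y')" using diff_mul[OF zc y y'] .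
      ultimately have "(1/Q)^M0 * av (y \<ominus> y') \<le> (1/Q)^M" using av_mult[OF zc] y y' avz by simp
      then have "av (y \<ominus> y') \<le> Q ^ M0 / Q ^ M" using Q1 by (simp add: power_divide field_simps)
      then have "\<alpha> * av (y \<ominus> y') \<le> \<alpha> * (Q ^ M0 / Q ^ M)" by (rule mult_left_mono) (use a in auto)
      also have "\<dots> \<le> \<beta>" using M(1) a b Q1 by (simp add: field_simps)
      finally show "\<alpha> * av (y \<ominus> y') \<le> \<beta>" .
    qed
  qed
qed

end

lemma Xset_iff: "(xr, xc, xp) \<in> Xset r s k F \<longleftrightarrow> (\<forall>i\<ge>r. xr i = 0) \<and> (\<forall>i\<ge>s. xc i = 0)
       \<and> (\<forall>j<k. xp j \<in> carrier (F j)) \<and> (\<forall>j\<ge>k. xp j = undefined)"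
  by (simp add: Xset_def)

definition aff_path :: "nat \<Rightarrow> (nat \<Rightarrow> 'a ring) \<Rightarrow> 'a edge list \<Rightarrow> 'a pt \<Rightarrow> 'a pt" where
  "aff_path k F w x = foldr (\<lambda>e y. aff_apply k F (elab e) y) w x"

lemma aff_path_Nil[simp]: "aff_path k F [] x = x" by (simp add: aff_path_def)
lemma aff_path_Cons[simp]: "aff_path k F (e # w) x = aff_apply k F (elab e) (aff_path k F w x)"
  by (simp add: aff_path_def)
lemma aff_path_append: "aff_path k F (v @ u) x = aff_path k F v (aff_path k F u x)"
  by (simp add: aff_path_def)

lemma T_path_Nil[simp]: "T_path r s k F [] = lin_id r s k F" by (simp add: T_path_def)
lemma T_path_Cons[simp]: "T_path r s k F (e # w) = lin_apply k F (fst (elab e)) (T_path r s k F w)"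
  by (simp add: T_path_def lin_comp_def)

definition cval :: "nat \<Rightarrow> (nat \<Rightarrow> 'a \<Rightarrow> real) \<Rightarrow> 'a pt \<Rightarrow> nat \<times> nat \<Rightarrow> real" where
  "cval k av a c = (case c of (0, i) \<Rightarrow> \<bar>fst a i\<bar> | (Suc 0, i) \<Rightarrow> cmod (fst (snd a) i)
                        | (_, j) \<Rightarrow> av j (snd (snd a) j))"

definition coords :: "nat \<Rightarrow> nat \<Rightarrow> nat \<Rightarrow> (nat \<times> nat) list" where
  "coords r s k = map (\<lambda>i. (0, i)) [0..<r] @ concat (map (\<lambda>i. [(1, i), (1, i)]) [0..<s]) @ map (\<lambda>j. (2, j)) [0..<k]"

lemma set_coords: "c \<in> set (coords r s k) \<longleftrightarrow> (\<exists>i<r. c = (0,i)) \<or> (\<exists>i<s. c = (1,i)) \<or> (\<exists>j<k. c = (2,j))"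
  by (auto simp: coords_def)

lemma length_coords: "length (coords r s k) = r + 2 * s + k"
proof -
  have "length (concat (map (\<lambda>i. [(1::nat, i), (1, i)]) [0..<s])) = 2 * s"
    by (induction s) auto
  then show ?thesis by (simp add: coords_def)
qed

lemma sing_vals_eq: "sing_vals r s k av a = rev (sort (map (cval k av a) (coords r s k)))"
proof -
  obtain ar ac ap where a: "a = (ar, ac, ap)" by (cases a)
  have "map (cval k av a) (concat (map (\<lambda>i. [(1, i), (1, i)]) [0..<s]))
        = concat (map (\<lambda>i. [cmod (ac i), cmod (ac i)]) [0..<s])"
    by (induction s) (auto simp: a cval_def)
  then show ?thesis
    by (simp add: sing_vals_def coords_def a cval_def comp_def)
qed

lemma prod_list_coords:
  "prod_list (map h (coords r s k)) = (\<Prod>i<r. h (0,i)) * (\<Prod>i<s. h (1,i) ^ 2) * (\<Prod>j<k. h (2,j))"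
proof -
  have c: "prod_list (map h (concat (map (\<lambda>i. [(1, i), (1, i)]) [0..<s]))) = (\<Prod>i<s. h (1,i) ^ 2)"
    by (induction s) (auto simp: power2_eq_square mult_ac)
  have a: "prod_list (map h (map (\<lambda>i. (0::nat, i)) [0..<r])) = (\<Prod>i<r. h (0,i))"
    by (induction r) auto
  have b: "prod_list (map h (map (\<lambda>i. (2::nat, i)) [0..<k])) = (\<Prod>i<k. h (2,i))"
    by (induction k) auto
  show ?thesis unfolding coords_def by (simp only: map_append prod_list.append a b c) (simp add: mult_ac)
qed

lemma prod_list_mono_map:
  fixes f g :: "'b \<Rightarrow> real"
  assumes "\<And>x. x \<in> set xs \<Longrightarrow> 0 \<le> f x \<and> f x \<le> g x"
  shows "prod_list (map f xs) \<le> prod_list (map g xs)"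
  using assms
proof (induction xs)
  case (Cons a xs)
  then show ?case by (auto intro!: mult_mono prod_list_nonneg order.trans[of 0 "f a" "g a"])
qed simp

locale gifs =
  fixes r s k n :: nat
    and F :: "nat \<Rightarrow> 'a ring" and av :: "nat \<Rightarrow> 'a \<Rightarrow> real"
    and G :: "nat \<Rightarrow> nat \<Rightarrow> ('a pt \<times> 'a pt) set"
    and \<Omega> :: "nat \<Rightarrow> 'a pt set"
  assumes padic: "\<forall>j<k. is_padic_completion (F j) (av j)"
    and fin: "\<forall>i<n. \<forall>j<n. finite (G i j)"
    and maps: "\<forall>i<n. \<forall>j<n. \<forall>f\<in>G i j. lin_ok r s k F av (fst f) \<and> snd f \<in> Xset r s k F"
    and nonempty: "\<forall>i<n. \<Omega> i \<noteq> {}"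
    and compact: "\<forall>i<n. dcompact r s k F av (\<Omega> i)"
    and solution: "\<forall>i<n. \<Omega> i = (\<Union>j<n. \<Union>f\<in>G i j. aff_apply k F f ` \<Omega> j)"
begin

abbreviation "X \<equiv> Xset r s k F"
abbreviation "E \<equiv> edges n G"

lemma padicj: "j < k \<Longrightarrow> padic (F j) (av j)"
  using padic unfolding padic_def padic_axioms_def is_padic_completion_def by blast

lemma cringj: "j < k \<Longrightarrow> cring (F j)"
  using padicj padic_def field_def domain_def by blast

lemma edge_props: "e \<in> E \<Longrightarrow> lin_ok r s k F av (fst (elab e)) \<and> snd (elab e) \<in> X \<and> esrc e < n \<and> etgt e < n"
proof -
  assume e: "e \<in> E"
  obtain i j f where ee: "e = (i, j, f)" by (cases e)
  have "i < n" "j < n" "f \<in> G i j" using e unfolding ee edges_def by auto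
  then show ?thesis using maps unfolding ee elab_def esrc_def etgt_def by simp
qed

lemma mc: "j < k \<Longrightarrow> x \<in> carrier (F j) \<Longrightarrow> y \<in> carrier (F j) \<Longrightarrow> x \<otimes>\<^bsub>F j\<^esub> y \<in> carrier (F j)"
proof - assume "j < k" then interpret cring "F j" by (rule cringj) show "x \<in> carrier (F j) \<Longrightarrow> y \<in> carrier (F j) \<Longrightarrow> ?thesis" by simp qed
lemma ac: "j < k \<Longrightarrow> x \<in> carrier (F j) \<Longrightarrow> y \<in> carrier (F j) \<Longrightarrow> x \<oplus>\<^bsub>F j\<^esub> y \<in> carrier (F j)"
proof - assume "j < k" then interpret cring "F j" by (rule cringj) show "x \<in> carrier (F j) \<Longrightarrow> y \<in> carrier (F j) \<Longrightarrow> ?thesis" by simp qed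
lemma oc: "j < k \<Longrightarrow> \<one>\<^bsub>F j\<^esub> \<in> carrier (F j)"
proof - assume "j < k" then interpret cring "F j" by (rule cringj) show ?thesis by simp qed

lemma edges_fin: "finite E"
proof -
  have "E \<subseteq> (\<Union>i<n. \<Union>j<n. (\<lambda>f. (i, j, f)) ` G i j)" by (auto simp: edges_def)
  moreover have "finite (\<Union>i<n. \<Union>j<n. (\<lambda>f. (i, j, f)) ` G i j)" using fin by auto
  ultimately show ?thesis by (rule finite_subset)
qed

lemma lin_apply_X: "a \<in> X \<Longrightarrow> b \<in> X \<Longrightarrow> lin_apply k F a b \<in> X"
proof -
  assume a: "a \<in> X" and b: "b \<in> X"
  obtain ar ac ap where A: "a = (ar, ac, ap)" by (cases a)
  obtain br bc bp where B: "b = (br, bc, bp)" by (cases b)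
  show ?thesis using a b unfolding A B lin_apply_def by (auto simp: Xset_iff mc)
qed

lemma aff_apply_X: "a \<in> X \<Longrightarrow> t \<in> X \<Longrightarrow> x \<in> X \<Longrightarrow> aff_apply k F (a, t) x \<in> X"
proof -
  assume a: "a \<in> X" and t: "t \<in> X" and x: "x \<in> X"
  have l: "lin_apply k F a x \<in> X" using lin_apply_X a x .
  obtain yr yc yp where Y: "lin_apply k F a x = (yr, yc, yp)" by (cases "lin_apply k F a x")
  obtain tr tc tp where T: "t = (tr, tc, tp)" by (cases t)
  show ?thesis using l t by (auto simp: aff_apply_def Y T Xset_iff ac)
qed

lemma lin_id_X: "lin_id r s k F \<in> X"
  by (auto simp: lin_id_def Xset_iff oc)

lemma Efin_edges: "w \<in> Efin n G \<Longrightarrow> set w \<subseteq> E" by (simp add: Efin_def)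

lemma T_path_X: "set w \<subseteq> E \<Longrightarrow> T_path r s k F w \<in> X"
proof (induction w)
  case (Cons e w)
  then show ?case using edge_props[of e] lin_apply_X[of "fst (elab e)"] by (simp add: lin_ok_def)
qed (simp add: lin_id_X)

lemma aff_path_X: "set w \<subseteq> E \<Longrightarrow> x \<in> X \<Longrightarrow> aff_path k F w x \<in> X"
proof (induction w)
  case (Cons e w)
  then show ?case using edge_props[of e] aff_apply_X[of "fst (elab e)" "snd (elab e)"]
    by (auto simp: lin_ok_def)
qed simp

end

lemma aff_R: "fst (aff_apply k F f x) i = fst (fst f) i * fst x i + fst (snd f) i"
  by (cases f, cases "fst f", cases "snd f", cases x) (auto simp: aff_apply_def lin_apply_def split: prod.split)
lemma aff_C: "fst (snd (aff_apply k F f x)) i = fst (snd (fst f)) i * fst (snd x) i + fst (snd (snd f)) i"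
  by (cases f, cases "fst f", cases "snd f", cases x) (auto simp: aff_apply_def lin_apply_def split: prod.split)
lemma aff_P: "j < k \<Longrightarrow> snd (snd (aff_apply k F f x)) j = (snd (snd (fst f)) j \<otimes>\<^bsub>F j\<^esub> snd (snd x) j) \<oplus>\<^bsub>F j\<^esub> snd (snd (snd f)) j"
  by (cases f, cases "fst f", cases "snd f", cases x) (auto simp: aff_apply_def lin_apply_def split: prod.split)
lemma lin_R: "fst (lin_apply k F a b) i = fst a i * fst b i"
  by (cases a, cases b) (auto simp: lin_apply_def)
lemma lin_C: "fst (snd (lin_apply k F a b)) i = fst (snd a) i * fst (snd b) i"
  by (cases a, cases b) (auto simp: lin_apply_def)
lemma lin_P: "j < k \<Longrightarrow> snd (snd (lin_apply k F a b)) j = snd (snd a) j \<otimes>\<^bsub>F j\<^esub> snd (snd b) j"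
  by (cases a, cases b) (auto simp: lin_apply_def)

lemma X_P: "x \<in> Xset r s k F \<Longrightarrow> j < k \<Longrightarrow> snd (snd x) j \<in> carrier (F j)"
  by (cases x) (simp add: Xset_iff)

context gifs begin

lemma dR: "set w \<subseteq> E \<Longrightarrow> x \<in> X \<Longrightarrow> y \<in> X \<Longrightarrow>
  fst (aff_path k F w x) i - fst (aff_path k F w y) i = fst (T_path r s k F w) i * (fst x i - fst y i)"
proof (induction w)
  case Nil
  then show ?case by (cases x, cases y) (auto simp: lin_id_def Xset_iff)
next
  case (Cons e w)
  have "fst (aff_path k F (e # w) x) i - fst (aff_path k F (e # w) y) i
     = fst (fst (elab e)) i * (fst (aff_path k F w x) i - fst (aff_path k F w y) i)"
    by (simp add: aff_R right_diff_distrib)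
  then show ?case using Cons by (simp add: lin_R mult.assoc)
qed

lemma dC: "set w \<subseteq> E \<Longrightarrow> x \<in> X \<Longrightarrow> y \<in> X \<Longrightarrow>
  fst (snd (aff_path k F w x)) i - fst (snd (aff_path k F w y)) i = fst (snd (T_path r s k F w)) i * (fst (snd x) i - fst (snd y) i)"
proof (induction w)
  case Nil
  then show ?case by (cases x, cases y) (auto simp: lin_id_def Xset_iff)
next
  case (Cons e w)
  have "fst (snd (aff_path k F (e # w) x)) i - fst (snd (aff_path k F (e # w) y)) i
     = fst (snd (fst (elab e))) i * (fst (snd (aff_path k F w x)) i - fst (snd (aff_path k F w y)) i)"
    by (simp add: aff_C right_diff_distrib)
  then show ?case using Cons by (simp add: lin_C mult.assoc)
qed

lemma dP: "set w \<subseteq> E \<Longrightarrow> x \<in> X \<Longrightarrow> y \<in> X \<Longrightarrow> j < k \<Longrightarrow>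
  snd (snd (aff_path k F w x)) j \<ominus>\<^bsub>F j\<^esub> snd (snd (aff_path k F w y)) j
   = snd (snd (T_path r s k F w)) j \<otimes>\<^bsub>F j\<^esub> (snd (snd x) j \<ominus>\<^bsub>F j\<^esub> snd (snd y) j)"
proof (induction w)
  case Nil
  then interpret cring "F j" using cringj by simp
  have "snd (snd x) j \<ominus>\<^bsub>F j\<^esub> snd (snd y) j \<in> carrier (F j)"
    using X_P[OF Nil(2) Nil(4)] X_P[OF Nil(3) Nil(4)] by simp
  then show ?case using Nil by (simp add: lin_id_def)
next
  case (Cons e w)
  then interpret cring "F j" using cringj by simp
  have ew: "set w \<subseteq> E" "e \<in> E" using Cons by auto
  have a: "fst (elab e) \<in> X" "snd (elab e) \<in> X" using edge_props[OF ew(2)] by (auto simp: lin_ok_def)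
  have u: "snd (snd (aff_path k F w x)) j \<in> carrier (F j)" using aff_path_X[OF ew(1) Cons.prems(2)] X_P Cons.prems by blast
  have v: "snd (snd (aff_path k F w y)) j \<in> carrier (F j)" using aff_path_X[OF ew(1) Cons.prems(3)] X_P Cons.prems by blast
  have T: "snd (snd (T_path r s k F w)) j \<in> carrier (F j)" using T_path_X[OF ew(1)] X_P Cons.prems by blast
  have ac: "snd (snd (fst (elab e))) j \<in> carrier (F j)" using a X_P Cons.prems by blast
  have tc: "snd (snd (snd (elab e))) j \<in> carrier (F j)" using a X_P Cons.prems by blast
  have d: "snd (snd x) j \<ominus>\<^bsub>F j\<^esub> snd (snd y) j \<in> carrier (F j)"
    using X_P[OF Cons.prems(2) Cons.prems(4)] X_P[OF Cons.prems(3) Cons.prems(4)] by simp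
  show ?case using Cons.IH[OF ew(1) Cons.prems(2,3,4)] Cons.prems(4)
    by (simp add: aff_P lin_P diff_aff[OF ac u v tc] m_assoc[OF ac T d])
qed

lemma cval_lin: "a \<in> X \<Longrightarrow> b \<in> X \<Longrightarrow> c \<in> set (coords r s k) \<Longrightarrow>
  cval k av (lin_apply k F a b) c = cval k av a c * cval k av b c"
proof -
  assume a: "a \<in> X" and b: "b \<in> X" and c: "c \<in> set (coords r s k)"
  show ?thesis using c unfolding set_coords
  proof (elim disjE exE conjE)
    fix j assume j: "j < k" and cc: "c = (2, j)"
    interpret padic "F j" "av j" using padicj[OF j] .
    show ?thesis using X_P[OF a j] X_P[OF b j] j by (simp add: cc cval_def lin_P av_mult)
  qed (auto simp: cval_def lin_R lin_C abs_mult norm_mult)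
qed

lemma cval_id: "c \<in> set (coords r s k) \<Longrightarrow> cval k av (lin_id r s k F) c = 1"
proof -
  assume c: "c \<in> set (coords r s k)"
  show ?thesis using c unfolding set_coords
  proof (elim disjE exE conjE)
    fix j assume j: "j < k" and cc: "c = (2, j)"
    interpret padic "F j" "av j" using padicj[OF j] .
    show ?thesis using j by (simp add: cc cval_def lin_id_def)
  qed (auto simp: cval_def lin_id_def)
qed

lemma cval_T: "set w \<subseteq> E \<Longrightarrow> c \<in> set (coords r s k) \<Longrightarrow>
  cval k av (T_path r s k F w) c = prod_list (map (\<lambda>e. cval k av (fst (elab e)) c) w)"
proof (induction w)
  case Nil then show ?case by (simp add: cval_id)
next
  case (Cons e w)
  have "fst (elab e) \<in> X" using edge_props[of e] Cons.prems by (auto simp: lin_ok_def)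
  then show ?case using Cons T_path_X[of w] by (simp add: cval_lin)
qed

lemma cval_edge: "e \<in> E \<Longrightarrow> c \<in> set (coords r s k) \<Longrightarrow> 0 < cval k av (fst (elab e)) c \<and> cval k av (fst (elab e)) c < 1"
proof -
  assume e: "e \<in> E" and c: "c \<in> set (coords r s k)"
  have l: "lin_ok r s k F av (fst (elab e))" using edge_props[OF e] by simp
  obtain ar ac ap where A: "fst (elab e) = (ar, ac, ap)" by (cases "fst (elab e)")
  show ?thesis using c l unfolding set_coords lin_ok_def A
    by (auto simp: cval_def)
qed

end

lemma dX_set_finite: fixes r s k :: nat shows "finite ({0} \<union> {\<bar>xr i - yr i\<bar> | i. i < r}
              \<union> {\<bar>Re (xc i - yc i)\<bar> | i. i < s} \<union> {\<bar>Im (xc i - yc i)\<bar> | i. i < s}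
              \<union> {av j (xp j \<ominus>\<^bsub>F j\<^esub> yp j) | j. j < k})"
  by (intro finite_UnI finite_image_set) (auto simp: finite_Collect_less_nat)

lemma dX_le:
  assumes "b \<ge> 0"
    and "\<And>i. i < r \<Longrightarrow> \<bar>fst x i - fst y i\<bar> \<le> b"
    and "\<And>i. i < s \<Longrightarrow> \<bar>Re (fst (snd x) i - fst (snd y) i)\<bar> \<le> b"
    and "\<And>i. i < s \<Longrightarrow> \<bar>Im (fst (snd x) i - fst (snd y) i)\<bar> \<le> b"
    and "\<And>j. j < k \<Longrightarrow> av j (snd (snd x) j \<ominus>\<^bsub>F j\<^esub> snd (snd y) j) \<le> b"
  shows "dX r s k F av x y \<le> b"
proof -
  obtain xr xc xp where x: "x = (xr, xc, xp)" by (cases x)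
  obtain yr yc yp where y: "y = (yr, yc, yp)" by (cases y)
  show ?thesis unfolding dX_def x y prod.case
    apply (subst Max_le_iff[OF dX_set_finite])
    using assms unfolding x y by auto
qed

lemma dX_ge:
  shows "0 \<le> dX r s k F av x y"
    and "i < r \<Longrightarrow> \<bar>fst x i - fst y i\<bar> \<le> dX r s k F av x y"
    and "i < s \<Longrightarrow> \<bar>Re (fst (snd x) i - fst (snd y) i)\<bar> \<le> dX r s k F av x y"
    and "i < s \<Longrightarrow> \<bar>Im (fst (snd x) i - fst (snd y) i)\<bar> \<le> dX r s k F av x y"
    and "j < k \<Longrightarrow> av j (snd (snd x) j \<ominus>\<^bsub>F j\<^esub> snd (snd y) j) \<le> dX r s k F av x y"
proof -
  obtain xr xc xp where x: "x = (xr, xc, xp)" by (cases x)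
  obtain yr yc yp where y: "y = (yr, yc, yp)" by (cases y)
  show "0 \<le> dX r s k F av x y" unfolding dX_def x y prod.case by (rule Max_ge[OF dX_set_finite]) simp
  show "i < r \<Longrightarrow> \<bar>fst x i - fst y i\<bar> \<le> dX r s k F av x y" unfolding dX_def x y prod.case by (rule Max_ge[OF dX_set_finite]) auto
  show "i < s \<Longrightarrow> \<bar>Re (fst (snd x) i - fst (snd y) i)\<bar> \<le> dX r s k F av x y" unfolding dX_def x y prod.case by (rule Max_ge[OF dX_set_finite]) auto
  show "i < s \<Longrightarrow> \<bar>Im (fst (snd x) i - fst (snd y) i)\<bar> \<le> dX r s k F av x y" unfolding dX_def x y prod.case by (rule Max_ge[OF dX_set_finite]) auto
  show "j < k \<Longrightarrow> av j (snd (snd x) j \<ominus>\<^bsub>F j\<^esub> snd (snd y) j) \<le> dX r s k F av x y" unfolding dX_def x y prod.case by (rule Max_ge[OF dX_set_finite]) auto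
qed

context gifs begin

lemma dX_tri: "x \<in> X \<Longrightarrow> y \<in> X \<Longrightarrow> z \<in> X \<Longrightarrow> dX r s k F av x z \<le> dX r s k F av x y + dX r s k F av y z"
proof (rule dX_le)
  assume x: "x \<in> X" and y: "y \<in> X" and z: "z \<in> X"
  show "0 \<le> dX r s k F av x y + dX r s k F av y z" by (intro add_nonneg_nonneg dX_ge(1))
  fix i
  show "\<bar>fst x i - fst z i\<bar> \<le> dX r s k F av x y + dX r s k F av y z" if i: "i < r"
  proof -
    have "\<bar>fst x i - fst y i\<bar> \<le> dX r s k F av x y" "\<bar>fst y i - fst z i\<bar> \<le> dX r s k F av y z"
      by (rule dX_ge(2)[OF i])+
    then show ?thesis by linarith
  qed
  show "\<bar>Re (fst (snd x) i - fst (snd z) i)\<bar> \<le> dX r s k F av x y + dX r s k F av y z" if i: "i < s"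
  proof -
    have "\<bar>Re (fst (snd x) i - fst (snd y) i)\<bar> \<le> dX r s k F av x y" "\<bar>Re (fst (snd y) i - fst (snd z) i)\<bar> \<le> dX r s k F av y z"
      by (rule dX_ge(3)[OF i])+
    then show ?thesis unfolding minus_complex.sel by linarith
  qed
  show "\<bar>Im (fst (snd x) i - fst (snd z) i)\<bar> \<le> dX r s k F av x y + dX r s k F av y z" if i: "i < s"
  proof -
    have "\<bar>Im (fst (snd x) i - fst (snd y) i)\<bar> \<le> dX r s k F av x y" "\<bar>Im (fst (snd y) i - fst (snd z) i)\<bar> \<le> dX r s k F av y z"
      by (rule dX_ge(4)[OF i])+
    then show ?thesis unfolding minus_complex.sel by linarith
  qed
next
  fix j assume x: "x \<in> X" and y: "y \<in> X" and z: "z \<in> X" and j: "j < k"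
  interpret padic "F j" "av j" using padicj[OF j] .
  have xc: "snd (snd x) j \<in> carrier (F j)" using X_P[OF x j] .
  have yc: "snd (snd y) j \<in> carrier (F j)" using X_P[OF y j] .
  have zc: "snd (snd z) j \<in> carrier (F j)" using X_P[OF z j] .
  have e: "snd (snd x) j \<ominus>\<^bsub>F j\<^esub> snd (snd z) j = (snd (snd x) j \<ominus>\<^bsub>F j\<^esub> snd (snd y) j) \<oplus>\<^bsub>F j\<^esub> (snd (snd y) j \<ominus>\<^bsub>F j\<^esub> snd (snd z) j)"
    using xc yc zc by algebra
  have "av j (snd (snd x) j \<ominus>\<^bsub>F j\<^esub> snd (snd z) j) \<le> max (av j (snd (snd x) j \<ominus>\<^bsub>F j\<^esub> snd (snd y) j)) (av j (snd (snd y) j \<ominus>\<^bsub>F j\<^esub> snd (snd z) j))"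
    unfolding e using xc yc zc by (intro av_ultra) auto
  also have "\<dots> \<le> dX r s k F av x y + dX r s k F av y z"
  proof -
    have "av j (snd (snd x) j \<ominus>\<^bsub>F j\<^esub> snd (snd y) j) \<le> dX r s k F av x y"
      "av j (snd (snd y) j \<ominus>\<^bsub>F j\<^esub> snd (snd z) j) \<le> dX r s k F av y z"
      by (rule dX_ge(5)[OF j])+
    moreover have "0 \<le> dX r s k F av x y" "0 \<le> dX r s k F av y z" by (rule dX_ge(1))+
    ultimately show ?thesis by linarith
  qed
  finally show "av j (snd (snd x) j \<ominus>\<^bsub>F j\<^esub> snd (snd z) j) \<le> dX r s k F av x y + dX r s k F av y z" .
qed

lemma dcompact_bdd:
  assumes S: "dcompact r s k F av S" and x0: "x0 \<in> S"
  shows "\<exists>B. \<forall>x\<in>S. dX r s k F av x x0 \<le> B"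
proof (rule ccontr)
  assume "\<not> ?thesis"
  then have "\<forall>m::nat. \<exists>x\<in>S. dX r s k F av x x0 > real m" by (meson not_le)
  then obtain xs where xs: "\<And>m. xs m \<in> S" "\<And>m. dX r s k F av (xs m) x0 > real m" by metis
  obtain l \<sigma> where l: "l \<in> S" "strict_mono \<sigma>" "(\<lambda>m. dX r s k F av (xs (\<sigma> m)) l) \<longlonglongrightarrow> 0"
    using S xs(1) unfolding dcompact_def by blast
  have SX: "S \<subseteq> X" using S unfolding dcompact_def by blast
  obtain M where M: "\<And>m. m \<ge> M \<Longrightarrow> dX r s k F av (xs (\<sigma> m)) l < 1"
    using LIMSEQ_D[OF l(3), of 1] dX_ge(1) by fastforce
  obtain m where m: "m \<ge> M" "real m > 1 + dX r s k F av l x0" using reals_Archimedean2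
    by (metis add.commute le_add2 less_le_not_le nat_le_linear of_nat_le_iff order.strict_trans2)
  have "real (\<sigma> m) \<ge> real m" using l(2) by (simp add: seq_suble)
  then have "dX r s k F av (xs (\<sigma> m)) x0 > 1 + dX r s k F av l x0" using xs(2)[of "\<sigma> m"] m by linarith
  moreover have "dX r s k F av (xs (\<sigma> m)) x0 \<le> dX r s k F av (xs (\<sigma> m)) l + dX r s k F av l x0"
    using dX_tri SX xs(1) l(1) x0 by blast
  ultimately show False using M[OF m(1)] by linarith
qed

lemma coord_bdd:
  "\<exists>D\<ge>0. \<forall>j<n. \<forall>x\<in>\<Omega> j. (\<forall>i<r. \<bar>fst x i\<bar> \<le> D) \<and> (\<forall>i<s. \<bar>Re (fst (snd x) i)\<bar> \<le> D \<and> \<bar>Im (fst (snd x) i)\<bar> \<le> D)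
      \<and> (\<forall>i<k. av i (snd (snd x) i) \<le> D)"
proof -
  have one: "\<exists>D\<ge>0. \<forall>x\<in>\<Omega> j. (\<forall>i<r. \<bar>fst x i\<bar> \<le> D) \<and> (\<forall>i<s. \<bar>Re (fst (snd x) i)\<bar> \<le> D \<and> \<bar>Im (fst (snd x) i)\<bar> \<le> D)
      \<and> (\<forall>i<k. av i (snd (snd x) i) \<le> D)" if j: "j < n" for j
  proof -
    obtain x0 where x0: "x0 \<in> \<Omega> j" using nonempty j by blast
    have S: "dcompact r s k F av (\<Omega> j)" using compact j by blast
    have SX: "\<Omega> j \<subseteq> X" using S unfolding dcompact_def by blast
    obtain B where B: "\<And>x. x \<in> \<Omega> j \<Longrightarrow> dX r s k F av x x0 \<le> B" using dcompact_bdd[OF S x0] by blast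
    have B0: "B \<ge> 0" using B[OF x0] dX_ge(1) order.trans by blast
    define C0 where "C0 = (\<Sum>i<r. \<bar>fst x0 i\<bar>) + (\<Sum>i<s. \<bar>Re (fst (snd x0) i)\<bar> + \<bar>Im (fst (snd x0) i)\<bar>) + (\<Sum>i<k. av i (snd (snd x0) i))"
    have x0X: "x0 \<in> X" using SX x0 by blast
    have avnn: "\<And>i. i < k \<Longrightarrow> 0 \<le> av i (snd (snd x0) i)"
      using padic.av_nn[OF padicj] X_P[OF x0X] by blast
    have s1: "\<bar>fst x0 i\<bar> \<le> (\<Sum>i<r. \<bar>fst x0 i\<bar>)" if "i < r" for i
      using that by (intro member_le_sum) auto
    have s2: "\<bar>Re (fst (snd x0) i)\<bar> + \<bar>Im (fst (snd x0) i)\<bar> \<le> (\<Sum>i<s. \<bar>Re (fst (snd x0) i)\<bar> + \<bar>Im (fst (snd x0) i)\<bar>)" if "i < s" for i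
      using that by (intro member_le_sum) auto
    have s3: "av i (snd (snd x0) i) \<le> (\<Sum>i<k. av i (snd (snd x0) i))" if "i < k" for i
      using that avnn by (intro member_le_sum) auto
    have C1: "0 \<le> (\<Sum>i<r. \<bar>fst x0 i\<bar>)" "0 \<le> (\<Sum>i<s. \<bar>Re (fst (snd x0) i)\<bar> + \<bar>Im (fst (snd x0) i)\<bar>)" "0 \<le> (\<Sum>i<k. av i (snd (snd x0) i))"
      using avnn by (auto intro!: sum_nonneg)
    show ?thesis
    proof (rule exI[of _ "B + C0"], intro conjI ballI allI impI)
      show "0 \<le> B + C0" using B0 C1 unfolding C0_def by simp
      fix x assume x: "x \<in> \<Omega> j"
      have xX: "x \<in> X" using SX x by blast
      fix i
      show "\<bar>fst x i\<bar> \<le> B + C0" if i: "i < r"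
      proof -
        have "\<bar>fst x i - fst x0 i\<bar> \<le> dX r s k F av x x0" by (rule dX_ge(2)[OF i])
        then show ?thesis using B[OF x] s1[OF i] C1 unfolding C0_def by linarith
      qed
      show "\<bar>Re (fst (snd x) i)\<bar> \<le> B + C0" if i: "i < s"
      proof -
        have "\<bar>Re (fst (snd x) i - fst (snd x0) i)\<bar> \<le> dX r s k F av x x0" by (rule dX_ge(3)[OF i])
        then show ?thesis using B[OF x] s2[OF i] C1 unfolding C0_def minus_complex.sel by linarith
      qed
      show "\<bar>Im (fst (snd x) i)\<bar> \<le> B + C0" if i: "i < s"
      proof -
        have "\<bar>Im (fst (snd x) i - fst (snd x0) i)\<bar> \<le> dX r s k F av x x0" by (rule dX_ge(4)[OF i])
        then show ?thesis using B[OF x] s2[OF i] C1 unfolding C0_def minus_complex.sel by linarith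
      qed
      assume i: "i < k"
      interpret padic "F i" "av i" using padicj[OF i] .
      have xc: "snd (snd x) i \<in> carrier (F i)" using X_P[OF xX i] .
      have x0c: "snd (snd x0) i \<in> carrier (F i)" using X_P[OF x0X i] .
      have e: "snd (snd x) i = (snd (snd x) i \<ominus>\<^bsub>F i\<^esub> snd (snd x0) i) \<oplus>\<^bsub>F i\<^esub> snd (snd x0) i"
        using xc x0c by algebra
      have "av i (snd (snd x) i) \<le> max (av i (snd (snd x) i \<ominus>\<^bsub>F i\<^esub> snd (snd x0) i)) (av i (snd (snd x0) i))"
        by (subst e, rule av_ultra) (use xc x0c in auto)
      then show "av i (snd (snd x) i) \<le> B + C0"
      proof -
        have "av i (snd (snd x) i \<ominus>\<^bsub>F i\<^esub> snd (snd x0) i) \<le> dX r s k F av x x0" by (rule dX_ge(5)[OF i])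
        then have "max (av i (snd (snd x) i \<ominus>\<^bsub>F i\<^esub> snd (snd x0) i)) (av i (snd (snd x0) i)) \<le> B + C0"
          using B[OF x] s3[OF i] C1 avnn[OF i] B0 unfolding C0_def by (intro max.boundedI) linarith+
        then show ?thesis using \<open>av i (snd (snd x) i) \<le> _\<close> by linarith
      qed
    qed
  qed
  then obtain Df where Df: "\<And>j. j < n \<Longrightarrow> Df j \<ge> 0 \<and> (\<forall>x\<in>\<Omega> j. (\<forall>i<r. \<bar>fst x i\<bar> \<le> Df j) \<and> (\<forall>i<s. \<bar>Re (fst (snd x) i)\<bar> \<le> Df j \<and> \<bar>Im (fst (snd x) i)\<bar> \<le> Df j)
      \<and> (\<forall>i<k. av i (snd (snd x) i) \<le> Df j))" by metis
  define D where "D = (\<Sum>j<n. Df j)"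
  have le: "Df j \<le> D" if "j < n" for j
    unfolding D_def using that Df by (intro member_le_sum) auto
  show ?thesis
  proof (rule exI[of _ D], intro conjI allI impI ballI)
    show "0 \<le> D" unfolding D_def using Df by (intro sum_nonneg) auto
    fix j x i assume j: "j < n" and x: "x \<in> \<Omega> j"
    note h = Df[OF j] le[OF j]
    show "i < r \<Longrightarrow> \<bar>fst x i\<bar> \<le> D" using h x by (meson order.trans)
    show "i < s \<Longrightarrow> \<bar>Re (fst (snd x) i)\<bar> \<le> D" using h x by (meson order.trans)
    show "i < s \<Longrightarrow> \<bar>Im (fst (snd x) i)\<bar> \<le> D" using h x by (meson order.trans)
    show "i < k \<Longrightarrow> av i (snd (snd x) i) \<le> D" using h x by (meson order.trans)
  qed
qed

end

lemma sorted_desc_nth: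
  fixes xs :: "real list"
  assumes "a \<le> b" "b < length xs"
  shows "rev (sort xs) ! b \<le> rev (sort xs) ! a"
proof -
  have s: "sorted (sort xs)" by simp
  have l: "length (sort xs) = length xs" by simp
  show ?thesis using assms
    by (simp add: rev_nth sorted_nth_mono[OF s])
qed

lemma prod_list_map_perm:
  fixes g :: "real \<Rightarrow> real"
  shows "prod_list (map g xs) = (\<Prod>m<length xs. g (rev (sort xs) ! m))"
proof -
  have "prod_list (map g xs) = prod_mset (image_mset g (mset xs))"
    by (simp add: prod_mset_prod_list[symmetric])
  also have "\<dots> = prod_mset (image_mset g (mset (rev (sort xs))))" by simp
  also have "\<dots> = prod_list (map g (rev (sort xs)))"
    by (simp add: prod_mset_prod_list[symmetric])
  also have "\<dots> = (\<Prod>m<length xs. g (rev (sort xs) ! m))"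
    by (simp add: prod.list_conv_set_nth lessThan_atLeast0)
  finally show ?thesis .
qed



lemma prod_min_pow_le:
  fixes \<sigma> :: "nat \<Rightarrow> real"
  assumes "\<And>m. m < N \<Longrightarrow> 0 < \<sigma> m" "\<And>m. m < N \<Longrightarrow> \<sigma> t \<le> \<sigma> m" "0 < \<sigma> t"
  shows "\<sigma> t ^ N \<le> (\<Prod>m<N. \<sigma> m)"
proof -
  have "\<sigma> t ^ N = (\<Prod>m<N. \<sigma> t)" by simp
  also have "\<dots> \<le> (\<Prod>m<N. \<sigma> m)"
    by (rule prod_mono) (use assms in auto)
  finally show ?thesis .
qed

lemma phi_bound_list:
  fixes xs :: "real list" and q :: real
  assumes pos: "\<forall>x\<in>set xs. x > 0" and ne: "xs \<noteq> []" and q: "q > 0"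
  defines "\<sigma> \<equiv> rev (sort xs)" and "N \<equiv> length xs"
  defines "j \<equiv> (if q \<le> real N then nat \<lceil>q\<rceil> else N)"
  shows "prod_list (map (\<lambda>x. max 1 (x / \<sigma>!(j-1))) xs) * (\<sigma>!(j-1)) powr q
       \<le> (if q \<le> real N then (\<Prod>m<j-1. \<sigma>!m) * (\<sigma>!(j-1)) powr (q - real j + 1)
          else (\<Prod>m<N. \<sigma>!m) powr (q / real N))"
proof -
  define t where "t = j - 1"
  have N0: "N > 0" using ne by (simp add: N_def)
  have j1: "1 \<le> j" "j \<le> N"
    using q N0 by (auto simp: j_def) linarith
  have tN: "t < N" using j1 by (simp add: t_def)
  have setsig: "set \<sigma> = set xs" by (simp add: \<sigma>_def)
  have lsig: "length \<sigma> = N" by (simp add: \<sigma>_def N_def)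
  have spos: "\<And>m. m < N \<Longrightarrow> 0 < \<sigma>!m"
    using pos setsig lsig by (metis nth_mem)
  have desc: "\<And>a b. a \<le> b \<Longrightarrow> b < N \<Longrightarrow> \<sigma>!b \<le> \<sigma>!a"
    unfolding \<sigma>_def N_def by (rule sorted_desc_nth)
  have tpos: "0 < \<sigma>!t" using spos tN by blast
  have "prod_list (map (\<lambda>x. max 1 (x / \<sigma>!t)) xs) = (\<Prod>m<N. max 1 (\<sigma>!m / \<sigma>!t))"
    unfolding \<sigma>_def N_def by (rule prod_list_map_perm)
  also have "\<dots> = (\<Prod>m<t. \<sigma>!m / \<sigma>!t) * (\<Prod>m\<in>{t..<N}. max 1 (\<sigma>!m / \<sigma>!t))"
  proof -
    have split: "{..<N} = {..<t} \<union> {t..<N}" using tN by auto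
    have "(\<Prod>m<N. max 1 (\<sigma>!m / \<sigma>!t)) = (\<Prod>m<t. max 1 (\<sigma>!m / \<sigma>!t)) * (\<Prod>m\<in>{t..<N}. max 1 (\<sigma>!m / \<sigma>!t))"
      by (subst split, rule prod.union_disjoint) auto
    moreover have "(\<Prod>m<t. max 1 (\<sigma>!m / \<sigma>!t)) = (\<Prod>m<t. \<sigma>!m / \<sigma>!t)"
    proof (rule prod.cong)
      fix m assume "m \<in> {..<t}"
      then have "\<sigma>!t \<le> \<sigma>!m" using desc tN by auto
      then show "max 1 (\<sigma>!m / \<sigma>!t) = \<sigma>!m / \<sigma>!t" using tpos by (simp add: field_simps)
    qed simp
    ultimately show ?thesis by simp
  qed
  also have "(\<Prod>m\<in>{t..<N}. max 1 (\<sigma>!m / \<sigma>!t)) = 1"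
  proof (rule prod.neutral, intro ballI)
    fix m assume "m \<in> {t..<N}"
    then have "\<sigma>!m \<le> \<sigma>!t" using desc by auto
    then show "max 1 (\<sigma>!m / \<sigma>!t) = 1" using tpos by (simp add: field_simps)
  qed
  finally have P: "prod_list (map (\<lambda>x. max 1 (x / \<sigma>!t)) xs) = (\<Prod>m<t. \<sigma>!m) / \<sigma>!t ^ t"
    by (simp add: prod_dividef)
  have key: "prod_list (map (\<lambda>x. max 1 (x / \<sigma>!t)) xs) * (\<sigma>!t) powr q = (\<Prod>m<t. \<sigma>!m) * (\<sigma>!t) powr (q - real t)"
    using tpos by (simp add: P powr_diff powr_realpow)
  show ?thesis
  proof (cases "q \<le> real N")
    case True
    have e: "q - real t = q - real j + 1" using j1 by (simp add: t_def of_nat_diff)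
    show ?thesis using key[unfolded e] True by (simp add: t_def)
  next
    case False
    then have jN: "j = N" by (simp add: j_def)
    have Nt: "N = Suc t" using jN j1 t_def by simp
    define P where "P = (\<Prod>m<N. \<sigma>!m)"
    have Ppos: "P > 0" unfolding P_def using spos by (intro prod_pos) auto
    have PP: "P = (\<Prod>m<t. \<sigma>!m) * \<sigma>!t" unfolding P_def Nt by simp
    have mn: "\<sigma>!t ^ N \<le> P" unfolding P_def
      proof (rule prod_min_pow_le[where \<sigma>="\<lambda>m. \<sigma>!m"])
      fix m assume "m < N" then show "\<sigma>!t \<le> \<sigma>!m" using desc[of m t] Nt by simp
    qed (use spos tpos in auto)
    have e: "q - real t = 1 + (q - real N)" using Nt by simp
    have "(\<sigma>!t) powr (q - real N) = ((\<sigma>!t) powr real N) powr ((q - real N) / real N)"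
      using N0 by (simp add: powr_powr)
    also have "\<dots> \<le> P powr ((q - real N) / real N)"
      apply (rule powr_mono2)
      using False N0 tpos mn by (auto simp: powr_realpow)
    finally have b: "(\<sigma>!t) powr (q - real N) \<le> P powr ((q - real N) / real N)" .
    have "(\<Prod>m<t. \<sigma>!m) * (\<sigma>!t) powr (q - real t) = P * (\<sigma>!t) powr (q - real N)"
      using tpos by (simp add: e powr_add PP)
    also have "\<dots> \<le> P * P powr ((q - real N) / real N)"
      using b Ppos by simp
    also have "\<dots> = P powr (q / real N)"
    proof -
      have "P * P powr ((q - real N) / real N) = P powr (1 + (q - real N) / real N)"
        using Ppos by (simp add: powr_add)
      also have "1 + (q - real N) / real N = q / real N" using N0 by (simp add: field_simps)
      finally show ?thesis .
    qed
    finally show ?thesis using key False jN by (simp add: t_def P_def)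
  qed
qed

context gifs begin

lemma amax_ex: "\<exists>a. 0 \<le> a \<and> a < 1 \<and> (\<forall>e\<in>E. \<forall>c\<in>set (coords r s k). cval k av (fst (elab e)) c \<le> a)"
proof -
  define A where "A = (\<lambda>p. cval k av (fst (elab (fst p))) (snd p)) ` (E \<times> set (coords r s k))"
  have fA: "finite (insert 0 A)" unfolding A_def using edges_fin by simp
  have lt: "\<forall>b\<in>insert 0 A. b < 1" unfolding A_def using cval_edge by auto
  have "Max (insert 0 A) < 1" using Max_less_iff[OF fA] lt by blast
  moreover have "0 \<le> Max (insert 0 A)" using fA by simp
  moreover have "\<forall>e\<in>E. \<forall>c\<in>set (coords r s k). cval k av (fst (elab e)) c \<le> Max (insert 0 A)"
  proof (intro ballI)
    fix e c assume e: "e \<in> E" and c: "c \<in> set (coords r s k)"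
    have "cval k av (fst (elab e)) c \<in> insert 0 A" unfolding A_def using e c
      by (intro insertI2 image_eqI[where x="(e, c)"]) auto
    then show "cval k av (fst (elab e)) c \<le> Max (insert 0 A)" using fA by (rule Max_ge[rotated])
  qed
  ultimately show ?thesis by blast
qed

lemma cval_T_bounds:
  assumes w: "set w \<subseteq> E" and c: "c \<in> set (coords r s k)"
    and a: "\<forall>e\<in>E. \<forall>c\<in>set (coords r s k). cval k av (fst (elab e)) c \<le> a"
  shows "0 < cval k av (T_path r s k F w) c" "cval k av (T_path r s k F w) c \<le> a ^ length w"
    "cval k av (T_path r s k F w) c \<le> 1"
proof -
  have "0 < prod_list (map (\<lambda>e. cval k av (fst (elab e)) c) w) \<and>
        prod_list (map (\<lambda>e. cval k av (fst (elab e)) c) w) \<le> a ^ length w \<and>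
        prod_list (map (\<lambda>e. cval k av (fst (elab e)) c) w) \<le> 1"
    using w
  proof (induction w)
    case (Cons e w)
    have ce: "0 < cval k av (fst (elab e)) c" "cval k av (fst (elab e)) c < 1" "cval k av (fst (elab e)) c \<le> a"
      using cval_edge[of e c] c a Cons.prems by auto
    have IH: "0 < prod_list (map (\<lambda>e. cval k av (fst (elab e)) c) w)"
      "prod_list (map (\<lambda>e. cval k av (fst (elab e)) c) w) \<le> a ^ length w"
      "prod_list (map (\<lambda>e. cval k av (fst (elab e)) c) w) \<le> 1" using Cons by auto
    show ?case using ce IH by (auto intro: mult_mono mult_le_one)
  qed simp
  then show "0 < cval k av (T_path r s k F w) c" "cval k av (T_path r s k F w) c \<le> a ^ length w"
    "cval k av (T_path r s k F w) c \<le> 1" using cval_T[OF w c] by auto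
qed

lemma cval_T_prefix:
  assumes w: "set (v @ u) \<subseteq> E" and c: "c \<in> set (coords r s k)"
  shows "cval k av (T_path r s k F (v @ u)) c \<le> cval k av (T_path r s k F v) c"
proof -
  obtain a where a: "\<forall>e\<in>E. \<forall>c\<in>set (coords r s k). cval k av (fst (elab e)) c \<le> a" using amax_ex by blast
  have v: "set v \<subseteq> E" and u: "set u \<subseteq> E" using w by auto
  have "cval k av (T_path r s k F (v @ u)) c = cval k av (T_path r s k F v) c * cval k av (T_path r s k F u) c"
    using cval_T[OF w c] cval_T[OF v c] cval_T[OF u c] by simp
  also have "\<dots> \<le> cval k av (T_path r s k F v) c * 1"
    using cval_T_bounds[OF v c a] cval_T_bounds[OF u c a] by (intro mult_left_mono) auto
  finally show ?thesis by simp
qed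

definition endv :: "nat \<Rightarrow> 'a edge list \<Rightarrow> nat" where
  "endv i w = (if w = [] then i else etgt (last w))"

lemma cover_paths:
  assumes i: "i < n" and x: "x \<in> \<Omega> i"
  shows "\<exists>w y. w \<in> Efin n G \<and> length w = l \<and> (w \<noteq> [] \<longrightarrow> esrc (hd w) = i) \<and> y \<in> \<Omega> (endv i w)
           \<and> x = aff_path k F w y"
proof (induction l)
  case 0
  show ?case using x by (intro exI[of _ "[]"] exI[of _ x]) (simp add: Efin_def endv_def)
next
  case (Suc l)
  then obtain w y where w: "w \<in> Efin n G" "length w = l" "w \<noteq> [] \<longrightarrow> esrc (hd w) = i"
    "y \<in> \<Omega> (endv i w)" "x = aff_path k F w y" by blast
  define t where "t = endv i w"
  have tn: "t < n"
  proof (cases "w = []")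
    case True then show ?thesis using i by (simp add: t_def endv_def)
  next
    case False
    then have "last w \<in> E" using w(1) unfolding Efin_def by auto
    then show ?thesis using False edge_props by (simp add: t_def endv_def)
  qed
  have "y \<in> (\<Union>j<n. \<Union>f\<in>G t j. aff_apply k F f ` \<Omega> j)" using solution tn w(4) t_def by blast
  then obtain j f y' where j: "j < n" "f \<in> G t j" "y' \<in> \<Omega> j" "y = aff_apply k F f y'" by blast
  define e where "e = (t, j, f)"
  have eE: "e \<in> E" using tn j unfolding e_def edges_def by simp
  have es: "esrc e = t" "etgt e = j" "elab e = f" by (simp_all add: e_def esrc_def etgt_def elab_def)
  show ?case
  proof (intro exI[of _ "w @ [e]"] exI[of _ y'] conjI impI)
    show "w @ [e] \<in> Efin n G"
      unfolding Efin_def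
    proof (intro CollectI conjI allI impI)
      show "set (w @ [e]) \<subseteq> E" using w(1) eE unfolding Efin_def by simp
      fix m assume m: "Suc m < length (w @ [e])"
      show "etgt ((w @ [e]) ! m) = esrc ((w @ [e]) ! Suc m)"
      proof (cases "Suc m < length w")
        case True then show ?thesis using w(1) unfolding Efin_def by (simp add: nth_append)
      next
        case False
        then have "Suc m = length w" using m by simp
        then have wne: "w \<noteq> []" by auto
        have "(w @ [e]) ! m = last w" "(w @ [e]) ! Suc m = e"
          using \<open>Suc m = length w\<close> wne by (auto simp: nth_append last_conv_nth simp flip: \<open>Suc m = length w\<close>)
        with wne have "w \<noteq> []" "(w @ [e]) ! m = last w" "(w @ [e]) ! Suc m = e" by auto
        then show ?thesis using es t_def endv_def by simp
      qed
    qed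
    show "length (w @ [e]) = Suc l" using w(2) by simp
    show "esrc (hd (w @ [e])) = i" using w(3) es t_def by (cases "w = []") (simp_all add: endv_def)
    show "y' \<in> \<Omega> (endv i (w @ [e]))" using j es by (simp add: endv_def)
    show "x = aff_path k F (w @ [e]) y'" using w(5) j(4) es by (simp add: aff_path_append)
  qed
qed

end

context gifs begin

lemma coding:
  assumes i: "i < n" and x: "x \<in> \<Omega> i"
  shows "\<exists>\<omega>\<in>Einf n G. esrc (\<omega> 0) = i \<and> (\<forall>l>0. \<exists>y\<in>\<Omega> (etgt (\<omega> (l - 1))). x = aff_path k F (map \<omega> [0..<l]) y)"
proof -
  define P where "P p q \<longleftrightarrow> fst q \<in> E \<and> esrc (fst q) = fst p \<and> snd q \<in> \<Omega> (etgt (fst q)) \<and> snd p = aff_apply k F (elab (fst q)) (snd q)" for p :: "nat \<times> 'a pt" and q :: "'a edge \<times> 'a pt"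
  have ex: "\<exists>q. P p q" if "fst p < n" "snd p \<in> \<Omega> (fst p)" for p
  proof -
    have "snd p \<in> (\<Union>j<n. \<Union>f\<in>G (fst p) j. aff_apply k F f ` \<Omega> j)" using solution that by blast
    then obtain j f y' where j: "j < n" "f \<in> G (fst p) j" "y' \<in> \<Omega> j" "snd p = aff_apply k F f y'" by blast
    show ?thesis
      by (rule exI[of _ "((fst p, j, f), y')"]) (use that j in \<open>simp add: P_def edges_def esrc_def etgt_def elab_def\<close>)
  qed
  define nxt where "nxt p = (SOME q. P p q)" for p
  define g where "g p = (etgt (fst (nxt p)), snd (nxt p))" for p
  define st where "st m = (g ^^ m) (i, x)" for m
  have st0: "st 0 = (i, x)" by (simp add: st_def)
  have stS: "st (Suc m) = g (st m)" for m by (simp add: st_def)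
  have inv: "fst (st m) < n \<and> snd (st m) \<in> \<Omega> (fst (st m)) \<and> P (st m) (nxt (st m))" for m
  proof (induction m)
    case 0
    have "P (st 0) (nxt (st 0))" unfolding nxt_def by (rule someI_ex, rule ex) (use i x st0 in auto)
    then show ?case using i x st0 by simp
  next
    case (Suc m)
    have pm: "P (st m) (nxt (st m))" using Suc by blast
    have a: "fst (st (Suc m)) < n" "snd (st (Suc m)) \<in> \<Omega> (fst (st (Suc m)))"
      using pm edge_props unfolding P_def stS g_def by auto
    have "P (st (Suc m)) (nxt (st (Suc m)))" unfolding nxt_def by (rule someI_ex, rule ex) (use a in auto)
    then show ?case using a by simp
  qed
  define \<omega> where "\<omega> m = fst (nxt (st m))" for m
  have \<omega>E: "\<omega> m \<in> E" for m using inv[of m] unfolding P_def \<omega>_def by blast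
  have \<omega>src: "esrc (\<omega> m) = fst (st m)" for m using inv[of m] unfolding P_def \<omega>_def by blast
  have \<omega>tgt: "etgt (\<omega> m) = fst (st (Suc m))" for m unfolding \<omega>_def stS g_def by simp
  have rep: "x = aff_path k F (map \<omega> [0..<l]) (snd (st l))" for l
  proof (induction l)
    case 0 then show ?case by (simp add: st0)
  next
    case (Suc l)
    have "snd (st l) = aff_apply k F (elab (\<omega> l)) (snd (st (Suc l)))"
      using inv[of l] unfolding P_def \<omega>_def stS g_def by simp
    then show ?case using Suc by (simp add: aff_path_append)
  qed
  show ?thesis
  proof (rule bexI[of _ \<omega>], intro conjI allI impI)
    show "esrc (\<omega> 0) = i" using \<omega>src st0 by simp
    fix l :: nat assume l: "l > 0"
    have "snd (st l) \<in> \<Omega> (etgt (\<omega> (l - 1)))" using inv[of l] \<omega>tgt[of "l - 1"] l by simp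
    then show "\<exists>y\<in>\<Omega> (etgt (\<omega> (l - 1))). x = aff_path k F (map \<omega> [0..<l]) y" using rep by blast
  next
    show "\<omega> \<in> Einf n G" unfolding Einf_def using \<omega>E \<omega>src \<omega>tgt by simp
  qed
qed

end

lemma choice2: "\<forall>i<m. \<exists>g R. Q i g R \<Longrightarrow> \<exists>gf Rf. \<forall>i<m. Q i (gf i) (Rf i)"
proof -
  assume a: "\<forall>i<m. \<exists>g R. Q i g R"
  then have "\<forall>i. \<exists>p. i < m \<longrightarrow> Q i (fst p) (snd p)" by auto
  then obtain pf where "\<forall>i. i < m \<longrightarrow> Q i (fst (pf i)) (snd (pf i))" by metis
  then show ?thesis by (intro exI[of _ "\<lambda>i. fst (pf i)"] exI[of _ "\<lambda>i. snd (pf i)"]) blast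
qed

lemma prod_list_cmult: "prod_list (map (\<lambda>x. (c::real) * f x) xs) = c ^ length xs * prod_list (map f xs)"
  by (induction xs) (simp_all add: mult_ac)

lemma card_idx_bound:
  fixes RR :: "nat \<Rightarrow> int set" and RC :: "nat \<Rightarrow> int set" and KP :: "nat \<Rightarrow> nat"
  assumes "\<And>i. i < r \<Longrightarrow> finite (RR i)" "\<And>i. i < s \<Longrightarrow> finite (RC i)"
  shows "finite ((\<Pi>\<^sub>E i\<in>{..<r}. RR i) \<times> (\<Pi>\<^sub>E i\<in>{..<s}. RC i) \<times> (\<Pi>\<^sub>E i\<in>{..<s}. RC i) \<times> (\<Pi>\<^sub>E j\<in>{..<k}. {..<KP j}))"
    "real (card ((\<Pi>\<^sub>E i\<in>{..<r}. RR i) \<times> (\<Pi>\<^sub>E i\<in>{..<s}. RC i) \<times> (\<Pi>\<^sub>E i\<in>{..<s}. RC i) \<times> (\<Pi>\<^sub>E j\<in>{..<k}. {..<KP j})))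
     = (\<Prod>i<r. real (card (RR i))) * (\<Prod>i<s. real (card (RC i)) ^ 2) * (\<Prod>j<k. real (KP j))"
proof -
  show "finite ((\<Pi>\<^sub>E i\<in>{..<r}. RR i) \<times> (\<Pi>\<^sub>E i\<in>{..<s}. RC i) \<times> (\<Pi>\<^sub>E i\<in>{..<s}. RC i) \<times> (\<Pi>\<^sub>E j\<in>{..<k}. {..<KP j}))"
    using assms by (intro finite_cartesian_product finite_PiE) auto
  show "real (card ((\<Pi>\<^sub>E i\<in>{..<r}. RR i) \<times> (\<Pi>\<^sub>E i\<in>{..<s}. RC i) \<times> (\<Pi>\<^sub>E i\<in>{..<s}. RC i) \<times> (\<Pi>\<^sub>E j\<in>{..<k}. {..<KP j})))
     = (\<Prod>i<r. real (card (RR i))) * (\<Prod>i<s. real (card (RC i)) ^ 2) * (\<Prod>j<k. real (KP j))"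
    by (simp add: card_cartesian_product card_PiE power2_eq_square prod.distrib mult_ac)
qed

context gifs begin

lemma pieces:
  assumes D0: "D \<ge> 0"
    and Db: "\<forall>j<n. \<forall>x\<in>\<Omega> j. (\<forall>i<r. \<bar>fst x i\<bar> \<le> D) \<and> (\<forall>i<s. \<bar>Re (fst (snd x) i)\<bar> \<le> D \<and> \<bar>Im (fst (snd x) i)\<bar> \<le> D)
      \<and> (\<forall>i<k. av i (snd (snd x) i) \<le> D)"
    and a0: "0 \<le> a" and a: "\<forall>e\<in>E. \<forall>c\<in>set (coords r s k). cval k av (fst (elab e)) c \<le> a"
  shows "\<exists>Cp\<ge>1. \<forall>w \<beta>. w \<in> Efin n G \<longrightarrow> w \<noteq> [] \<longrightarrow> \<beta> > 0 \<longrightarrow> (\<exists>Ps::'a pt set list.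
      aff_path k F w ` \<Omega> (etgt (last w)) \<subseteq> \<Union>(set Ps)
      \<and> (\<forall>P\<in>set Ps. P \<noteq> {} \<and> P \<subseteq> X \<and> (\<forall>x\<in>P. \<forall>y\<in>P. dX r s k F av x y \<le> 2 * \<beta> \<and> dX r s k F av x y \<le> 4 * D * a ^ length w))
      \<and> real (length Ps) \<le> Cp ^ (r + 2 * s + k) * prod_list (map (\<lambda>c. max 1 (cval k av (T_path r s k F w) c / \<beta>)) (coords r s k)))"
proof -
  obtain CR where CR: "CR \<ge> 1" "\<forall>\<alpha>>0. \<forall>\<beta>>0. \<exists>g::real \<Rightarrow> int. \<exists>R. finite R \<and> real (card R) \<le> CR * max 1 (\<alpha>/\<beta>)
      \<and> (\<forall>y. \<bar>y\<bar> \<le> D \<longrightarrow> g y \<in> R) \<and> (\<forall>y y'. g y = g y' \<longrightarrow> \<alpha> * \<bar>y - y'\<bar> \<le> \<beta>)"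
    using real_index[OF D0] by blast
  define Pk where "Pk j C \<longleftrightarrow> C \<ge> 1 \<and> (\<forall>\<alpha>>0. \<forall>\<beta>>0. \<exists>g::'a \<Rightarrow> nat. \<exists>K::nat. real K \<le> C * max 1 (\<alpha>/\<beta>)
      \<and> (\<forall>y\<in>carrier (F j). av j y \<le> D \<longrightarrow> g y < K)
      \<and> (\<forall>y\<in>carrier (F j). \<forall>y'\<in>carrier (F j). av j y \<le> D \<longrightarrow> av j y' \<le> D \<longrightarrow> g y = g y' \<longrightarrow> \<alpha> * av j (y \<ominus>\<^bsub>F j\<^esub> y') \<le> \<beta>))" for j C
  have ex1: "\<exists>C. Pk j C" if j: "j < k" for j
    unfolding Pk_def by (rule padic.padic_index[OF padicj[OF j] D0])
  have "\<forall>j. \<exists>C. j < k \<longrightarrow> Pk j C" using ex1 by blast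
  then obtain CP where CPa: "\<forall>j. j < k \<longrightarrow> Pk j (CP j)" by (rule choice[THEN exE])
  have CP: "\<And>j. j < k \<Longrightarrow> CP j \<ge> 1 \<and> (\<forall>\<alpha>>0. \<forall>\<beta>>0. \<exists>g::'a \<Rightarrow> nat. \<exists>K::nat. real K \<le> CP j * max 1 (\<alpha>/\<beta>)
      \<and> (\<forall>y\<in>carrier (F j). av j y \<le> D \<longrightarrow> g y < K)
      \<and> (\<forall>y\<in>carrier (F j). \<forall>y'\<in>carrier (F j). av j y \<le> D \<longrightarrow> av j y' \<le> D \<longrightarrow> g y = g y' \<longrightarrow> \<alpha> * av j (y \<ominus>\<^bsub>F j\<^esub> y') \<le> \<beta>))"
    using CPa unfolding Pk_def by blast
  define Cp where "Cp = CR + (\<Sum>j<k. CP j)"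
  have CP0: "\<And>j. j < k \<Longrightarrow> 0 \<le> CP j" using CP by (meson order.trans zero_le_one)
  have "0 \<le> (\<Sum>j<k. CP j)" using CP0 by (intro sum_nonneg) auto
  then have CRCp: "CR \<le> Cp" unfolding Cp_def by simp
  have CPCp: "CP j \<le> Cp" if "j < k" for j
  proof -
    have "CP j \<le> (\<Sum>j<k. CP j)" using that CP0 by (intro member_le_sum) auto
    then show ?thesis unfolding Cp_def using CR by simp
  qed
  show ?thesis
  proof (rule exI[of _ Cp], intro conjI allI impI)
    show "1 \<le> Cp" using CRCp CR by simp
    fix w :: "'a edge list" and \<beta> :: real
    assume wE: "w \<in> Efin n G" and wne: "w \<noteq> []" and b: "\<beta> > 0"
    have wsE: "set w \<subseteq> E" using Efin_edges[OF wE] .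
    define t where "t = etgt (last w)"
    have "last w \<in> E" using wsE wne last_in_set by blast
    then have tn: "t < n" using edge_props[of "last w"] unfolding t_def by blast
    have XtX: "\<Omega> t \<subseteq> X" using compact tn unfolding dcompact_def by blast
    define T where "T = T_path r s k F w"
    define \<alpha> where "\<alpha> c = cval k av T c" for c
    have apos: "\<And>c. c \<in> set (coords r s k) \<Longrightarrow> 0 < \<alpha> c" unfolding \<alpha>_def T_def using cval_T_bounds[OF wsE _ a] by blast
    have ale: "\<And>c. c \<in> set (coords r s k) \<Longrightarrow> \<alpha> c \<le> a ^ length w" unfolding \<alpha>_def T_def using cval_T_bounds[OF wsE _ a] by blast
    have cR: "(0, i) \<in> set (coords r s k)" if "i < r" for i using that by (simp add: set_coords)
    have cC: "(1, i) \<in> set (coords r s k)" if "i < s" for i using that by (simp add: set_coords)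
    have cP: "(2, j) \<in> set (coords r s k)" if "j < k" for j using that by (simp add: set_coords)
    define QR where "QR \<alpha>' g R \<longleftrightarrow> finite R \<and> real (card R) \<le> CR * max 1 (\<alpha>'/\<beta>)
      \<and> (\<forall>y. \<bar>y\<bar> \<le> D \<longrightarrow> g y \<in> R) \<and> (\<forall>y y'. g y = g y' \<longrightarrow> \<alpha>' * \<bar>y - y'\<bar> \<le> \<beta>)"
      for \<alpha>' and g :: "real \<Rightarrow> int" and R :: "int set"
    define QP where "QP j g K \<longleftrightarrow> real K \<le> CP j * max 1 (\<alpha> (2,j)/\<beta>)
      \<and> (\<forall>y\<in>carrier (F j). av j y \<le> D \<longrightarrow> g y < K)
      \<and> (\<forall>y\<in>carrier (F j). \<forall>y'\<in>carrier (F j). av j y \<le> D \<longrightarrow> av j y' \<le> D \<longrightarrow> g y = g y' \<longrightarrow> \<alpha> (2,j) * av j (y \<ominus>\<^bsub>F j\<^esub> y') \<le> \<beta>)"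
      for j and g :: "'a \<Rightarrow> nat" and K :: nat
    have exR: "\<exists>g R. QR \<alpha>' g R" if "\<alpha>' > 0" for \<alpha>'
      unfolding QR_def by (rule CR(2)[rule_format, OF that b])
    have exP: "\<exists>g K. QP j g K" if "j < k" for j
      unfolding QP_def by (rule conjunct2[OF CP[OF that], rule_format, OF apos[OF cP[OF that]] b])
    have "\<forall>i<r. \<exists>g R. QR (\<alpha> (0,i)) g R" using exR apos cR by blast
    then obtain gR RR where gR0: "\<forall>i<r. QR (\<alpha> (0,i)) (gR i) (RR i)"
      using choice2[of r "\<lambda>i g R. QR (\<alpha> (0,i)) g R"] by blast
    have "\<forall>i<s. \<exists>g R. QR (\<alpha> (1,i)) g R" using exR apos cC by blast
    then obtain gC RC where gC0: "\<forall>i<s. QR (\<alpha> (1,i)) (gC i) (RC i)"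
      using choice2[of s "\<lambda>i g R. QR (\<alpha> (1,i)) g R"] by blast
    have "\<forall>j<k. \<exists>g K. QP j g K" using exP by blast
    then obtain gP KP where gP0: "\<forall>j<k. QP j (gP j) (KP j)"
      using choice2[of k "\<lambda>j g K. QP j g K"] by blast
    have gR: "\<forall>i<r. finite (RR i) \<and> real (card (RR i)) \<le> CR * max 1 (\<alpha> (0,i)/\<beta>)
      \<and> (\<forall>y. \<bar>y\<bar> \<le> D \<longrightarrow> gR i y \<in> RR i) \<and> (\<forall>y y'. gR i y = gR i y' \<longrightarrow> \<alpha> (0,i) * \<bar>y - y'\<bar> \<le> \<beta>)"
      using gR0 by (simp only: QR_def)
    have gC: "\<forall>i<s. finite (RC i) \<and> real (card (RC i)) \<le> CR * max 1 (\<alpha> (1,i)/\<beta>)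
      \<and> (\<forall>y. \<bar>y\<bar> \<le> D \<longrightarrow> gC i y \<in> RC i) \<and> (\<forall>y y'. gC i y = gC i y' \<longrightarrow> \<alpha> (1,i) * \<bar>y - y'\<bar> \<le> \<beta>)"
      using gC0 by (simp only: QR_def)
    have gP: "\<forall>j<k. real (KP j) \<le> CP j * max 1 (\<alpha> (2,j)/\<beta>)
      \<and> (\<forall>y\<in>carrier (F j). av j y \<le> D \<longrightarrow> gP j y < KP j)
      \<and> (\<forall>y\<in>carrier (F j). \<forall>y'\<in>carrier (F j). av j y \<le> D \<longrightarrow> av j y' \<le> D \<longrightarrow> gP j y = gP j y' \<longrightarrow> \<alpha> (2,j) * av j (y \<ominus>\<^bsub>F j\<^esub> y') \<le> \<beta>)"
      using gP0 by (simp only: QP_def)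
    define idx where "idx x = (restrict (\<lambda>i. gR i (fst x i)) {..<r}, restrict (\<lambda>i. gC i (Re (fst (snd x) i))) {..<s},
       restrict (\<lambda>i. gC i (Im (fst (snd x) i))) {..<s}, restrict (\<lambda>j. gP j (snd (snd x) j)) {..<k})" for x :: "'a pt"
    define S where "S = (\<Pi>\<^sub>E i\<in>{..<r}. RR i) \<times> (\<Pi>\<^sub>E i\<in>{..<s}. RC i) \<times> (\<Pi>\<^sub>E i\<in>{..<s}. RC i) \<times> (\<Pi>\<^sub>E j\<in>{..<k}. {..<KP j})"
    have finS: "finite S" and cardS: "real (card S) = (\<Prod>i<r. real (card (RR i))) * (\<Prod>i<s. real (card (RC i)) ^ 2) * (\<Prod>j<k. real (KP j))"
      unfolding S_def using card_idx_bound[of r RR s RC k KP] gR gC by auto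
    define V where "V = idx ` \<Omega> t"
    have VS: "V \<subseteq> S"
    proof
      fix v assume "v \<in> V"
      then obtain x where x: "x \<in> \<Omega> t" "v = idx x" unfolding V_def by blast
      have xb: "\<forall>i<r. \<bar>fst x i\<bar> \<le> D" "\<forall>i<s. \<bar>Re (fst (snd x) i)\<bar> \<le> D \<and> \<bar>Im (fst (snd x) i)\<bar> \<le> D"
        "\<forall>i<k. av i (snd (snd x) i) \<le> D" using Db tn x(1) by blast+
      have xc: "\<And>j. j < k \<Longrightarrow> snd (snd x) j \<in> carrier (F j)" using X_P XtX x(1) by blast
      show "v \<in> S" unfolding x(2) idx_def S_def using xb xc gR gC gP by auto
    qed
    have finV: "finite V" using finite_subset[OF VS finS] .
    obtain vs where vs: "set vs = V" "distinct vs" using finite_distinct_list[OF finV] by blast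
    define Ps where "Ps = map (\<lambda>v. aff_path k F w ` {x\<in>\<Omega> t. idx x = v}) vs"
    have key: "dX r s k F av (aff_path k F w x) (aff_path k F w y) \<le> min (2 * \<beta>) (4 * D * a ^ length w)"
      if x: "x \<in> \<Omega> t" and y: "y \<in> \<Omega> t" and xy: "idx x = idx y" for x y
    proof -
      have xX: "x \<in> X" and yX: "y \<in> X" using XtX x y by auto
      have xb: "\<forall>i<r. \<bar>fst x i\<bar> \<le> D" "\<forall>i<s. \<bar>Re (fst (snd x) i)\<bar> \<le> D \<and> \<bar>Im (fst (snd x) i)\<bar> \<le> D"
        "\<forall>i<k. av i (snd (snd x) i) \<le> D" using Db tn x by blast+
      have yb: "\<forall>i<r. \<bar>fst y i\<bar> \<le> D" "\<forall>i<s. \<bar>Re (fst (snd y) i)\<bar> \<le> D \<and> \<bar>Im (fst (snd y) i)\<bar> \<le> D"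
        "\<forall>i<k. av i (snd (snd y) i) \<le> D" using Db tn y by blast+
      have an: "0 \<le> a ^ length w" using a0 by simp
      show ?thesis
      proof (rule dX_le)
        show "0 \<le> min (2 * \<beta>) (4 * D * a ^ length w)" using b D0 an by simp
      next
        fix i assume i: "i < r"
        have eq: "gR i (fst x i) = gR i (fst y i)" using fun_cong[OF arg_cong[where f=fst, OF xy], of i] i
          unfolding idx_def by simp
        have h1: "\<alpha> (0,i) * \<bar>fst x i - fst y i\<bar> \<le> \<beta>" using gR i eq by blast
        have al: "\<alpha> (0, i) = \<bar>fst T i\<bar>" unfolding \<alpha>_def by (simp add: cval_def)
        have d: "\<bar>fst (aff_path k F w x) i - fst (aff_path k F w y) i\<bar> = \<alpha> (0,i) * \<bar>fst x i - fst y i\<bar>"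
          using dR[OF wsE xX yX, of i] al unfolding T_def by (simp add: abs_mult)
        have "\<bar>fst x i\<bar> \<le> D" "\<bar>fst y i\<bar> \<le> D" using xb(1) yb(1) i by auto
        then have bx: "\<bar>fst x i - fst y i\<bar> \<le> 2 * D" by arith
        have h2: "\<alpha> (0,i) * \<bar>fst x i - fst y i\<bar> \<le> a ^ length w * (2 * D)"
          using bx ale[OF cR[OF i]] apos[OF cR[OF i]] an by (intro mult_mono) auto
        show "\<bar>fst (aff_path k F w x) i - fst (aff_path k F w y) i\<bar> \<le> min (2 * \<beta>) (4 * D * a ^ length w)"
          using d h1 h2 b D0 an by (simp add: mult_ac)
      next
        fix i assume i: "i < s"
        have eqR: "gC i (Re (fst (snd x) i)) = gC i (Re (fst (snd y) i))"
          using fun_cong[OF arg_cong[where f="\<lambda>p. fst (snd p)", OF xy], of i] i unfolding idx_def by simp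
        have eqI: "gC i (Im (fst (snd x) i)) = gC i (Im (fst (snd y) i))"
          using fun_cong[OF arg_cong[where f="\<lambda>p. fst (snd (snd p))", OF xy], of i] i unfolding idx_def by simp
        define dd where "dd = fst (snd x) i - fst (snd y) i"
        have h1: "\<alpha> (1,i) * \<bar>Re dd\<bar> \<le> \<beta>" "\<alpha> (1,i) * \<bar>Im dd\<bar> \<le> \<beta>" using gC i eqR eqI unfolding dd_def by auto
        have al: "\<alpha> (1, i) = cmod (fst (snd T) i)" unfolding \<alpha>_def by (simp add: cval_def)
        have d: "fst (snd (aff_path k F w x)) i - fst (snd (aff_path k F w y)) i = fst (snd T) i * dd"
          using dC[OF wsE xX yX, of i] unfolding T_def dd_def by simp
        have cm: "cmod (fst (snd T) i * dd) \<le> \<alpha> (1,i) * \<bar>Re dd\<bar> + \<alpha> (1,i) * \<bar>Im dd\<bar>"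
        proof -
          have "cmod (fst (snd T) i * dd) = \<alpha> (1,i) * cmod dd" using al by (simp add: norm_mult)
          also have "\<dots> \<le> \<alpha> (1,i) * (\<bar>Re dd\<bar> + \<bar>Im dd\<bar>)" using apos[OF cC[OF i]] cmod_le by (intro mult_left_mono) auto
          finally show ?thesis by (simp add: distrib_left)
        qed
        have "\<bar>Re (fst (snd x) i)\<bar> \<le> D" "\<bar>Re (fst (snd y) i)\<bar> \<le> D" "\<bar>Im (fst (snd x) i)\<bar> \<le> D" "\<bar>Im (fst (snd y) i)\<bar> \<le> D"
          using xb(2) yb(2) i by auto
        then have rb: "\<bar>Re dd\<bar> \<le> 2 * D" "\<bar>Im dd\<bar> \<le> 2 * D" unfolding dd_def minus_complex.sel by arith+
        have h2: "\<alpha> (1,i) * \<bar>Re dd\<bar> + \<alpha> (1,i) * \<bar>Im dd\<bar> \<le> a ^ length w * (2 * D) + a ^ length w * (2 * D)"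
          using rb ale[OF cC[OF i]] apos[OF cC[OF i]] an by (intro add_mono mult_mono) auto
        have bnd: "cmod (fst (snd T) i * dd) \<le> min (2 * \<beta>) (4 * D * a ^ length w)"
          using cm h1 h2 by (simp add: algebra_simps)
        show "\<bar>Re (fst (snd (aff_path k F w x)) i - fst (snd (aff_path k F w y)) i)\<bar> \<le> min (2 * \<beta>) (4 * D * a ^ length w)"
          using d bnd abs_Re_le_cmod order.trans by metis
        show "\<bar>Im (fst (snd (aff_path k F w x)) i - fst (snd (aff_path k F w y)) i)\<bar> \<le> min (2 * \<beta>) (4 * D * a ^ length w)"
          using d bnd abs_Im_le_cmod order.trans by metis
      next
        fix j assume j: "j < k"
        interpret padic "F j" "av j" using padicj[OF j] .
        have xc: "snd (snd x) j \<in> carrier (F j)" using X_P[OF xX j] .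
        have yc: "snd (snd y) j \<in> carrier (F j)" using X_P[OF yX j] .
        have Tc: "snd (snd T) j \<in> carrier (F j)" using X_P[OF T_path_X[OF wsE] j] unfolding T_def .
        have eq: "gP j (snd (snd x) j) = gP j (snd (snd y) j)"
          using fun_cong[OF arg_cong[where f="\<lambda>p. snd (snd (snd p))", OF xy], of j] j unfolding idx_def by simp
        have h1: "\<alpha> (2,j) * av j (snd (snd x) j \<ominus>\<^bsub>F j\<^esub> snd (snd y) j) \<le> \<beta>"
          using gP j xc yc xb(3) yb(3) eq by blast
        have al: "\<alpha> (2, j) = av j (snd (snd T) j)" unfolding \<alpha>_def by (simp add: cval_def)
        have d: "av j (snd (snd (aff_path k F w x)) j \<ominus>\<^bsub>F j\<^esub> snd (snd (aff_path k F w y)) j)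
              = \<alpha> (2,j) * av j (snd (snd x) j \<ominus>\<^bsub>F j\<^esub> snd (snd y) j)"
          using dP[OF wsE xX yX j] al av_mult[OF Tc] xc yc unfolding T_def by simp
        have "av j (snd (snd x) j \<ominus>\<^bsub>F j\<^esub> snd (snd y) j) \<le> D"
        proof -
          have "av j (snd (snd x) j) \<le> D" "av j (snd (snd y) j) \<le> D" using xb(3) yb(3) j by auto
          then show ?thesis using av_minus_le[OF xc yc] by linarith
        qed
        then have h2: "\<alpha> (2,j) * av j (snd (snd x) j \<ominus>\<^bsub>F j\<^esub> snd (snd y) j) \<le> a ^ length w * D"
          using ale[OF cP[OF j]] apos[OF cP[OF j]] av_nn xc yc an by (intro mult_mono) auto
        show "av j (snd (snd (aff_path k F w x)) j \<ominus>\<^bsub>F j\<^esub> snd (snd (aff_path k F w y)) j) \<le> min (2 * \<beta>) (4 * D * a ^ length w)"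
        proof -
          have "0 \<le> a ^ length w * D" using an D0 by simp
          then have "a ^ length w * D \<le> 4 * D * a ^ length w" by (simp add: mult_ac)
          then show ?thesis unfolding d using h1 h2 b by (intro min.boundedI) linarith+
        qed
      qed
    qed
    show "\<exists>Ps::'a pt set list.
      aff_path k F w ` \<Omega> (etgt (last w)) \<subseteq> \<Union>(set Ps)
      \<and> (\<forall>P\<in>set Ps. P \<noteq> {} \<and> P \<subseteq> X \<and> (\<forall>x\<in>P. \<forall>y\<in>P. dX r s k F av x y \<le> 2 * \<beta> \<and> dX r s k F av x y \<le> 4 * D * a ^ length w))
      \<and> real (length Ps) \<le> Cp ^ (r + 2 * s + k) * prod_list (map (\<lambda>c. max 1 (cval k av (T_path r s k F w) c / \<beta>)) (coords r s k))"
    proof (intro exI[of _ Ps] conjI)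
      show "aff_path k F w ` \<Omega> (etgt (last w)) \<subseteq> \<Union>(set Ps)"
      proof
        fix z assume "z \<in> aff_path k F w ` \<Omega> (etgt (last w))"
        then obtain x where x: "x \<in> \<Omega> t" "z = aff_path k F w x" unfolding t_def by blast
        have "idx x \<in> set vs" using vs x unfolding V_def by blast
        then show "z \<in> \<Union>(set Ps)" unfolding Ps_def using x by auto
      qed
    next
      show "\<forall>P\<in>set Ps. P \<noteq> {} \<and> P \<subseteq> X \<and> (\<forall>x\<in>P. \<forall>y\<in>P. dX r s k F av x y \<le> 2 * \<beta> \<and> dX r s k F av x y \<le> 4 * D * a ^ length w)"
      proof (rule ballI)
        fix P assume P: "P \<in> set Ps"
        then obtain v where v: "v \<in> V" "P = aff_path k F w ` {x\<in>\<Omega> t. idx x = v}" unfolding Ps_def using vs by auto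
        have "P \<noteq> {}" using v unfolding V_def by auto
        moreover have "P \<subseteq> X" using v XtX aff_path_X[OF wsE] by auto
        moreover have "\<forall>x\<in>P. \<forall>y\<in>P. dX r s k F av x y \<le> 2 * \<beta> \<and> dX r s k F av x y \<le> 4 * D * a ^ length w"
          using v key by fastforce
        ultimately show "P \<noteq> {} \<and> P \<subseteq> X \<and> (\<forall>x\<in>P. \<forall>y\<in>P. dX r s k F av x y \<le> 2 * \<beta> \<and> dX r s k F av x y \<le> 4 * D * a ^ length w)" by blast
      qed
    next
      have "real (length Ps) = real (card V)" unfolding Ps_def using vs distinct_card by fastforce
      also have "\<dots> \<le> real (card S)" using card_mono[OF finS VS] by simp
      also have "\<dots> = (\<Prod>i<r. real (card (RR i))) * (\<Prod>i<s. real (card (RC i)) ^ 2) * (\<Prod>j<k. real (KP j))" by (rule cardS)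
      also have "\<dots> \<le> (\<Prod>i<r. Cp * max 1 (\<alpha> (0,i)/\<beta>)) * (\<Prod>i<s. (Cp * max 1 (\<alpha> (1,i)/\<beta>)) ^ 2) * (\<Prod>j<k. Cp * max 1 (\<alpha> (2,j)/\<beta>))"
      proof (intro mult_mono prod_mono conjI power_mono prod_nonneg)
        fix i assume "i \<in> {..<r}"
        then show "real (card (RR i)) \<le> Cp * max 1 (\<alpha> (0,i)/\<beta>)" using gR CRCp
          by (meson lessThan_iff max.cobounded1 mult_right_mono order.trans zero_le_one)
      next
        fix i assume "i \<in> {..<s}"
        then show "real (card (RC i)) \<le> Cp * max 1 (\<alpha> (1,i)/\<beta>)" using gC CRCp
          by (meson lessThan_iff max.cobounded1 mult_right_mono order.trans zero_le_one)
      next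
        fix j assume "j \<in> {..<k}"
        then show "real (KP j) \<le> Cp * max 1 (\<alpha> (2,j)/\<beta>)" using gP CPCp
          by (meson lessThan_iff max.cobounded1 mult_right_mono order.trans zero_le_one)
      qed (use CRCp CR in \<open>auto intro!: mult_nonneg_nonneg prod_nonneg zero_le_power\<close>)
      also have "\<dots> = prod_list (map (\<lambda>c. Cp * max 1 (\<alpha> c / \<beta>)) (coords r s k))"
        by (simp add: prod_list_coords)
      also have "\<dots> = Cp ^ (r + 2 * s + k) * prod_list (map (\<lambda>c. max 1 (cval k av (T_path r s k F w) c / \<beta>)) (coords r s k))"
        by (simp add: prod_list_cmult length_coords \<alpha>_def T_def)
      finally show "real (length Ps) \<le> Cp ^ (r + 2 * s + k) * prod_list (map (\<lambda>c. max 1 (cval k av (T_path r s k F w) c / \<beta>)) (coords r s k))" .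
    qed
  qed
qed

end

lemma diam_bound:
  assumes "P \<noteq> {}" "\<And>x y. x \<in> P \<Longrightarrow> y \<in> P \<Longrightarrow> d x y \<le> b" "\<And>x y. 0 \<le> d x y"
  shows "0 \<le> diam_set d P" "diam_set d P \<le> b"
proof -
  have ne: "{d x y | x y. x \<in> P \<and> y \<in> P} \<noteq> {}" using assms(1) by blast
  have bdd: "bdd_above {d x y | x y. x \<in> P \<and> y \<in> P}" using assms(2) by (auto intro!: bdd_aboveI)
  obtain x where x: "x \<in> P" using assms(1) by blast
  have "0 \<le> d x x" by (rule assms(3))
  also have "d x x \<le> Sup {d x y | x y. x \<in> P \<and> y \<in> P}" using x by (intro cSup_upper[OF _ bdd]) blast
  finally show "0 \<le> diam_set d P" using assms(1) by (simp add: diam_set_def)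
  show "diam_set d P \<le> b" using assms(1) unfolding diam_set_def
    by (auto intro!: cSup_least[OF ne] assms(2))
qed

lemma test_arch: "0 < (y::real) \<Longrightarrow> x < 1 \<Longrightarrow> \<exists>n. x ^ n < y" by (rule real_arch_pow_inv)

context gifs begin

lemma Phi_eq:
  fixes a :: "'a pt"
  assumes "q > 0"
  defines "xs \<equiv> map (cval k av a) (coords r s k)"
  defines "\<sigma> \<equiv> rev (sort xs)" and "N \<equiv> length xs"
  defines "j \<equiv> (if q \<le> real N then nat \<lceil>q\<rceil> else N)"
  shows "Phi r s k av q a = (if q \<le> real N then (\<Prod>m<j-1. \<sigma>!m) * (\<sigma>!(j-1)) powr (q - real j + 1)
          else (\<Prod>m<N. \<sigma>!m) powr (q / real N))"
  using assms(1) unfolding Phi_def sing_vals_eq xs_def[symmetric] \<sigma>_def[symmetric] j_def N_def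
  by (simp add: Let_def \<sigma>_def)

lemma cost_bound:
  assumes q: "q > 0" and N: "r + 2 * s + k > 0" and c: "set c \<subseteq> E"
  defines "xs \<equiv> map (cval k av (T_path r s k F c)) (coords r s k)"
  defines "jj \<equiv> (if q \<le> real (length xs) then nat \<lceil>q\<rceil> else length xs)"
  defines "\<beta> \<equiv> rev (sort xs) ! (jj - 1)"
  assumes Cp: "Cp \<ge> 1" and Ps: "\<forall>P\<in>set Ps. P \<noteq> {} \<and> (\<forall>x\<in>P. \<forall>y\<in>P. dX r s k F av x y \<le> 2 * \<beta>)"
    and len: "real (length Ps) \<le> Cp ^ (r + 2 * s + k) * prod_list (map (\<lambda>c. max 1 (cval k av T c / \<beta>)) (coords r s k))"
    and Tc: "\<And>cc. cc \<in> set (coords r s k) \<Longrightarrow> 0 < cval k av T cc \<and> cval k av T cc \<le> cval k av (T_path r s k F c) cc"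
  shows "\<beta> > 0" "(\<Sum>P\<leftarrow>Ps. diam_pow (dX r s k F av) P q) \<le> Cp ^ (r + 2 * s + k) * 2 powr q * Phi r s k av q (T_path r s k F c)"
proof -
  obtain a where a: "\<forall>e\<in>E. \<forall>c\<in>set (coords r s k). cval k av (fst (elab e)) c \<le> a" using amax_ex by blast
  have xpos: "\<forall>x\<in>set xs. x > 0" unfolding xs_def using cval_T_bounds(1)[OF c _ a] by auto
  have xne: "xs \<noteq> []" using N length_coords[of r s k] unfolding xs_def by auto
  have lx: "length xs = r + 2 * s + k" unfolding xs_def by (simp add: length_coords)
  have lx0: "length xs > 0" using xne by simp
  have j1: "1 \<le> jj" "jj \<le> length xs" using q lx0 unfolding jj_def by (auto simp: Suc_le_eq)
  have "\<beta> \<in> set (rev (sort xs))" unfolding \<beta>_def using j1 by (intro nth_mem) auto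
  then show bpos: "\<beta> > 0" using xpos by auto
  have dp: "diam_pow (dX r s k F av) P q \<le> (2 * \<beta>) powr q" if "P \<in> set Ps" for P
  proof -
    have d: "0 \<le> diam_set (dX r s k F av) P" "diam_set (dX r s k F av) P \<le> 2 * \<beta>"
    proof -
      have ne: "P \<noteq> {}" and bd: "\<And>x y. x \<in> P \<Longrightarrow> y \<in> P \<Longrightarrow> dX r s k F av x y \<le> 2 * \<beta>" using Ps that by auto
      have nn: "\<And>x y. 0 \<le> dX r s k F av x y" by (rule dX_ge(1))
      show "0 \<le> diam_set (dX r s k F av) P" "diam_set (dX r s k F av) P \<le> 2 * \<beta>"
        using diam_bound[of P "dX r s k F av" "2 * \<beta>", OF ne bd nn] by auto
    qed
    then show ?thesis using Ps that q unfolding diam_pow_def by (simp add: powr_mono2)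
  qed
  have "(\<Sum>P\<leftarrow>Ps. diam_pow (dX r s k F av) P q) \<le> (\<Sum>P\<leftarrow>Ps. (2 * \<beta>) powr q)"
    using dp by (intro sum_list_mono) auto
  also have "\<dots> = real (length Ps) * (2 * \<beta>) powr q" by (simp add: sum_list_triv)
  also have "\<dots> \<le> Cp ^ (r + 2 * s + k) * prod_list (map (\<lambda>c. max 1 (cval k av T c / \<beta>)) (coords r s k)) * (2 * \<beta>) powr q"
    using len by (intro mult_right_mono) auto
  also have "\<dots> \<le> Cp ^ (r + 2 * s + k) * prod_list (map (\<lambda>x. max 1 (x / \<beta>)) xs) * (2 * \<beta>) powr q"
  proof -
    have "prod_list (map (\<lambda>c. max 1 (cval k av T c / \<beta>)) (coords r s k)) \<le> prod_list (map (\<lambda>cc. max 1 (cval k av (T_path r s k F c) cc / \<beta>)) (coords r s k))"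
    proof (rule prod_list_mono_map)
      fix cc assume cc: "cc \<in> set (coords r s k)"
      have "cval k av T cc / \<beta> \<le> cval k av (T_path r s k F c) cc / \<beta>"
        using Tc[OF cc] bpos by (intro divide_right_mono) auto
      then show "0 \<le> max 1 (cval k av T cc / \<beta>) \<and> max 1 (cval k av T cc / \<beta>) \<le> max 1 (cval k av (T_path r s k F c) cc / \<beta>)"
        by auto
    qed
    then show ?thesis unfolding xs_def using Cp by (simp add: comp_def mult_right_mono)
  qed
  also have "\<dots> = Cp ^ (r + 2 * s + k) * 2 powr q * (prod_list (map (\<lambda>x. max 1 (x / \<beta>)) xs) * \<beta> powr q)"
    using bpos by (simp add: powr_mult mult_ac)
  also have "\<dots> \<le> Cp ^ (r + 2 * s + k) * 2 powr q * Phi r s k av q (T_path r s k F c)"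
  proof -
    have "prod_list (map (\<lambda>x. max 1 (x / \<beta>)) xs) * \<beta> powr q \<le> Phi r s k av q (T_path r s k F c)"
      using phi_bound_list[OF xpos xne q] Phi_eq[OF q, of "T_path r s k F c"] unfolding \<beta>_def jj_def xs_def
      by simp
    then show ?thesis using Cp by (intro mult_left_mono) auto
  qed
  finally show "(\<Sum>P\<leftarrow>Ps. diam_pow (dX r s k F av) P q) \<le> Cp ^ (r + 2 * s + k) * 2 powr q * Phi r s k av q (T_path r s k F c)" .
qed

end

lemma diam_pow_nn: "0 \<le> diam_pow d U q"
  by (simp add: diam_pow_def)

context gifs begin

lemma beta_pos:
  assumes q: "q > 0" and N: "r + 2 * s + k > 0" and c: "set c \<subseteq> E"
  defines "xs \<equiv> map (cval k av (T_path r s k F c)) (coords r s k)"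
  defines "jj \<equiv> (if q \<le> real (length xs) then nat \<lceil>q\<rceil> else length xs)"
  shows "rev (sort xs) ! (jj - 1) > 0"
proof -
  obtain a where a: "\<forall>e\<in>E. \<forall>c\<in>set (coords r s k). cval k av (fst (elab e)) c \<le> a" using amax_ex by blast
  have xpos: "\<forall>x\<in>set xs. x > 0" unfolding xs_def using cval_T_bounds(1)[OF c _ a] by auto
  have xne: "xs \<noteq> []" using N length_coords[of r s k] unfolding xs_def by auto
  have lx0: "length xs > 0" using xne by simp
  have j1: "1 \<le> jj" "jj \<le> length xs" using q lx0 unfolding jj_def by (auto simp: Suc_le_eq)
  have "rev (sort xs) ! (jj - 1) \<in> set (rev (sort xs))" using j1 by (intro nth_mem) auto
  then show ?thesis using xpos by auto
qed

lemma haus_bound: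
  assumes q: "q > 0" and N: "r + 2 * s + k > 0" and i: "i < n"
  shows "\<exists>C\<ge>0. \<forall>\<delta>>0. \<exists>L. \<forall>(p::nat \<Rightarrow> 'a edge list) (c::nat \<Rightarrow> 'a edge list) (B::ennreal).
     (\<forall>m. p m \<noteq> [] \<longrightarrow> p m \<in> Efin n G \<and> L \<le> length (p m) \<and> (\<exists>u. p m = c m @ u))
     \<longrightarrow> \<Omega> i \<subseteq> (\<Union>m\<in>{m. p m \<noteq> []}. aff_path k F (p m) ` \<Omega> (etgt (last (p m))))
     \<longrightarrow> (\<Sum>m. if p m = [] then 0 else ennreal (Phi r s k av q (T_path r s k F (c m)))) \<le> B
     \<longrightarrow> (INF U\<in>{U :: nat \<Rightarrow> 'a pt set. (\<forall>j. U j \<subseteq> Xset r s k F \<and> (\<forall>x\<in>U j. \<forall>y\<in>U j. dX r s k F av x y \<le> \<delta>)) \<and> \<Omega> i \<subseteq> (\<Union>j. U j)}.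
           (\<Sum>j. ennreal (diam_pow (dX r s k F av) (U j) q))) \<le> ennreal C * B"
proof -
  obtain D where D0: "D \<ge> 0" and Db: "\<forall>j<n. \<forall>x\<in>\<Omega> j. (\<forall>i<r. \<bar>fst x i\<bar> \<le> D) \<and> (\<forall>i<s. \<bar>Re (fst (snd x) i)\<bar> \<le> D \<and> \<bar>Im (fst (snd x) i)\<bar> \<le> D)
      \<and> (\<forall>i<k. av i (snd (snd x) i) \<le> D)" using coord_bdd by blast
  obtain a where a0: "0 \<le> a" and a1: "a < 1" and a: "\<forall>e\<in>E. \<forall>c\<in>set (coords r s k). cval k av (fst (elab e)) c \<le> a"
    using amax_ex by blast
  obtain Cp where Cp: "Cp \<ge> 1" and Pcs: "\<forall>w \<beta>. w \<in> Efin n G \<longrightarrow> w \<noteq> [] \<longrightarrow> \<beta> > 0 \<longrightarrow> (\<exists>Ps::'a pt set list.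
      aff_path k F w ` \<Omega> (etgt (last w)) \<subseteq> \<Union>(set Ps)
      \<and> (\<forall>P\<in>set Ps. P \<noteq> {} \<and> P \<subseteq> X \<and> (\<forall>x\<in>P. \<forall>y\<in>P. dX r s k F av x y \<le> 2 * \<beta> \<and> dX r s k F av x y \<le> 4 * D * a ^ length w))
      \<and> real (length Ps) \<le> Cp ^ (r + 2 * s + k) * prod_list (map (\<lambda>c. max 1 (cval k av (T_path r s k F w) c / \<beta>)) (coords r s k)))"
    using pieces[OF D0 Db a0 a] by blast
  define C where "C = Cp ^ (r + 2 * s + k) * 2 powr q"
  have C0: "C \<ge> 0" unfolding C_def using Cp by simp
  show ?thesis
  proof (rule exI[of _ C], intro conjI allI impI)
    show "0 \<le> C" by (rule C0)
    fix \<delta> :: real assume d: "\<delta> > 0"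
    obtain L where L: "a ^ L < \<delta> / (4 * D + 1)" using real_arch_pow_inv[of "\<delta> / (4 * D + 1)" a] d D0 a1 by auto
    show "\<exists>L. \<forall>(p::nat \<Rightarrow> 'a edge list) (c::nat \<Rightarrow> 'a edge list) (B::ennreal).
     (\<forall>m. p m \<noteq> [] \<longrightarrow> p m \<in> Efin n G \<and> L \<le> length (p m) \<and> (\<exists>u. p m = c m @ u))
     \<longrightarrow> \<Omega> i \<subseteq> (\<Union>m\<in>{m. p m \<noteq> []}. aff_path k F (p m) ` \<Omega> (etgt (last (p m))))
     \<longrightarrow> (\<Sum>m. if p m = [] then 0 else ennreal (Phi r s k av q (T_path r s k F (c m)))) \<le> B
     \<longrightarrow> (INF U\<in>{U :: nat \<Rightarrow> 'a pt set. (\<forall>j. U j \<subseteq> Xset r s k F \<and> (\<forall>x\<in>U j. \<forall>y\<in>U j. dX r s k F av x y \<le> \<delta>)) \<and> \<Omega> i \<subseteq> (\<Union>j. U j)}.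
           (\<Sum>j. ennreal (diam_pow (dX r s k F av) (U j) q))) \<le> ennreal C * B"
    proof (rule exI[of _ L], intro allI impI)
      fix p c :: "nat \<Rightarrow> 'a edge list" and B :: ennreal
      assume H1: "\<forall>m. p m \<noteq> [] \<longrightarrow> p m \<in> Efin n G \<and> L \<le> length (p m) \<and> (\<exists>u. p m = c m @ u)"
        and H2: "\<Omega> i \<subseteq> (\<Union>m\<in>{m. p m \<noteq> []}. aff_path k F (p m) ` \<Omega> (etgt (last (p m))))"
        and H3: "(\<Sum>m. if p m = [] then 0 else ennreal (Phi r s k av q (T_path r s k F (c m)))) \<le> B"
      define xs where "xs m = map (cval k av (T_path r s k F (c m))) (coords r s k)" for m
      define jj where "jj m = (if q \<le> real (length (xs m)) then nat \<lceil>q\<rceil> else length (xs m))" for m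
      define \<beta> where "\<beta> m = rev (sort (xs m)) ! (jj m - 1)" for m
      define props where "props m Ps \<longleftrightarrow> aff_path k F (p m) ` \<Omega> (etgt (last (p m))) \<subseteq> \<Union>(set Ps)
        \<and> (\<forall>P\<in>set Ps. P \<noteq> {} \<and> P \<subseteq> X \<and> (\<forall>x\<in>P. \<forall>y\<in>P. dX r s k F av x y \<le> 2 * \<beta> m \<and> dX r s k F av x y \<le> 4 * D * a ^ length (p m)))
        \<and> real (length Ps) \<le> Cp ^ (r + 2 * s + k) * prod_list (map (\<lambda>cc. max 1 (cval k av (T_path r s k F (p m)) cc / \<beta> m)) (coords r s k))"
        for m and Ps :: "'a pt set list"
      define Ps where "Ps m = (SOME Ps. props m Ps)" for m
      have pm: "p m \<in> Efin n G" "L \<le> length (p m)" "\<exists>u. p m = c m @ u" if "p m \<noteq> []" for m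
        using H1 that by blast+
      have cE: "set (c m) \<subseteq> E" if "p m \<noteq> []" for m
        using pm[OF that] Efin_edges by fastforce
      have bpos: "\<beta> m > 0" if "p m \<noteq> []" for m
        unfolding \<beta>_def jj_def xs_def by (rule beta_pos[OF q N cE[OF that]])
      have Psp: "props m (Ps m)" if "p m \<noteq> []" for m
      proof -
        have "\<exists>Ps. props m Ps" unfolding props_def by (rule Pcs[rule_format, OF pm(1)[OF that] that bpos[OF that]])
        then show ?thesis unfolding Ps_def by (rule someI_ex)
      qed
      have cost: "(\<Sum>P\<leftarrow>Ps m. diam_pow (dX r s k F av) P q) \<le> C * Phi r s k av q (T_path r s k F (c m))"
        if pne: "p m \<noteq> []" for m
      proof -
        have pr: "props m (Ps m)" using Psp[OF pne] .
        have Tc: "0 < cval k av (T_path r s k F (p m)) cc \<and> cval k av (T_path r s k F (p m)) cc \<le> cval k av (T_path r s k F (c m)) cc"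
          if cc: "cc \<in> set (coords r s k)" for cc
        proof -
          obtain u where u: "p m = c m @ u" using pm(3)[OF pne] by blast
          have sE: "set (p m) \<subseteq> E" using pm(1)[OF pne] Efin_edges by blast
          show ?thesis using cval_T_bounds(1)[OF sE cc a] cval_T_prefix[of "c m" u, OF _ cc] sE u by simp
        qed
        show ?thesis
          using cost_bound(2)[OF q N cE[OF pne] Cp, of "Ps m" "T_path r s k F (p m)"] pr Tc
          unfolding props_def C_def \<beta>_def jj_def xs_def by auto
      qed
      define V where "V mt = (if p (fst mt) \<noteq> [] \<and> snd mt < length (Ps (fst mt)) then Ps (fst mt) ! snd mt else {})" for mt
      define U where "U j = V (prod_decode j)" for j
      have Vp: "V mt \<subseteq> X \<and> (\<forall>x\<in>V mt. \<forall>y\<in>V mt. dX r s k F av x y \<le> \<delta>)" for mt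
      proof (cases "p (fst mt) \<noteq> [] \<and> snd mt < length (Ps (fst mt))")
        case True
        define m where "m = fst mt"
        have pne: "p m \<noteq> []" and t: "snd mt < length (Ps m)" using True m_def by auto
        have P: "V mt \<in> set (Ps m)" using t True unfolding V_def m_def by simp
        have pr: "props m (Ps m)" using Psp[OF pne] .
        have "a ^ length (p m) \<le> a ^ L" using pm(2)[OF pne] a0 a1 by (intro power_decreasing) auto
        then have "4 * D * a ^ length (p m) \<le> 4 * D * a ^ L" using D0 by (intro mult_left_mono) auto
        also have "\<dots> \<le> (4 * D + 1) * a ^ L" using a0 by (simp add: distrib_right)
        also have "\<dots> < \<delta>" using L D0 by (simp add: field_simps)
        finally have lt: "4 * D * a ^ length (p m) < \<delta>" .
        show ?thesis using pr P lt unfolding props_def by fastforce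
      next
        case False
        then have "V mt = {}" unfolding V_def by auto
        then show ?thesis by simp
      qed
      have cov: "\<Omega> i \<subseteq> (\<Union>j. U j)"
      proof
        fix x assume x: "x \<in> \<Omega> i"
        then obtain m where m: "p m \<noteq> []" "x \<in> aff_path k F (p m) ` \<Omega> (etgt (last (p m)))" using H2 by blast
        then have "x \<in> \<Union>(set (Ps m))" using Psp[OF m(1)] unfolding props_def by blast
        then obtain t where t: "t < length (Ps m)" "x \<in> Ps m ! t" by (metis UnionE in_set_conv_nth)
        then have "x \<in> U (prod_encode (m, t))" unfolding U_def V_def using m(1) by simp
        then show "x \<in> (\<Union>j. U j)" by blast
      qed
      have Uin: "U \<in> {U :: nat \<Rightarrow> 'a pt set. (\<forall>j. U j \<subseteq> Xset r s k F \<and> (\<forall>x\<in>U j. \<forall>y\<in>U j. dX r s k F av x y \<le> \<delta>)) \<and> \<Omega> i \<subseteq> (\<Union>j. U j)}"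
        using Vp cov unfolding U_def by auto
      define h where "h m = (if p m = [] then 0 else ennreal (Phi r s k av q (T_path r s k F (c m))))" for m
      define g where "g m = (\<Sum>t. ennreal (diam_pow (dX r s k F av) (V (m, t)) q))" for m
      have gle: "g m \<le> ennreal C * h m" for m
      proof (cases "p m = []")
        case True
        then have "g m = 0" unfolding g_def V_def by (simp add: diam_pow_def)
        then show ?thesis by simp
      next
        case False
        have "g m = (\<Sum>t<length (Ps m). ennreal (diam_pow (dX r s k F av) (V (m, t)) q))"
          unfolding g_def by (rule suminf_finite) (auto simp: V_def diam_pow_def)
        also have "\<dots> = (\<Sum>t<length (Ps m). ennreal (diam_pow (dX r s k F av) (Ps m ! t) q))"
          using False by (intro sum.cong) (auto simp: V_def)
        also have "\<dots> = ennreal (\<Sum>t<length (Ps m). diam_pow (dX r s k F av) (Ps m ! t) q)"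
          by (rule sum_ennreal) (rule diam_pow_nn)
        also have "(\<Sum>t<length (Ps m). diam_pow (dX r s k F av) (Ps m ! t) q) = (\<Sum>P\<leftarrow>Ps m. diam_pow (dX r s k F av) P q)"
          by (simp add: sum_list_sum_nth lessThan_atLeast0)
        also have "ennreal \<dots> \<le> ennreal (C * Phi r s k av q (T_path r s k F (c m)))"
          using cost[OF False] by (rule ennreal_leI)
        also have "\<dots> = ennreal C * h m" unfolding h_def using False C0 by (simp add: ennreal_mult')
        finally show ?thesis .
      qed
      have "(\<Sum>j. ennreal (diam_pow (dX r s k F av) (U j) q)) = (\<Sum>j. (\<lambda>mt. ennreal (diam_pow (dX r s k F av) (V mt) q)) (prod_decode j))"
        unfolding U_def by simp
      also have "\<dots> = suminf g" by (rule suminf_ennreal_2dimen) (simp add: g_def)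
      also have "\<dots> \<le> (\<Sum>m. ennreal C * h m)" by (rule suminf_le[OF gle]) auto
      also have "\<dots> = ennreal C * (\<Sum>m. h m)" by simp
      also have "\<dots> \<le> ennreal C * B" using H3 unfolding h_def by (intro mult_left_mono) auto
      finally have "(\<Sum>j. ennreal (diam_pow (dX r s k F av) (U j) q)) \<le> ennreal C * B" .
      then show "(INF U\<in>{U :: nat \<Rightarrow> 'a pt set. (\<forall>j. U j \<subseteq> Xset r s k F \<and> (\<forall>x\<in>U j. \<forall>y\<in>U j. dX r s k F av x y \<le> \<delta>)) \<and> \<Omega> i \<subseteq> (\<Union>j. U j)}.
           (\<Sum>j. ennreal (diam_pow (dX r s k F av) (U j) q))) \<le> ennreal C * B"
        using Uin by (meson INF_lower order.trans)
    qed
  qed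
qed

end

lemma small_level:
  fixes f :: "'b \<Rightarrow> ennreal" and e :: ennreal
  assumes S: "infsum f A < \<infinity>" and e: "e > 0" and fin: "\<And>l. finite (Lv l)" and sub: "\<And>l. Lv l \<subseteq> A"
    and disj: "\<And>F. finite F \<Longrightarrow> F \<subseteq> A \<Longrightarrow> \<exists>l0. \<forall>l\<ge>l0. Lv l \<inter> F = {}"
  shows "\<exists>l0. \<forall>l\<ge>l0. sum f (Lv l) \<le> e"
proof -
  have Seq: "infsum f A = (SUP F\<in>{F. finite F \<and> F \<subseteq> A}. sum f F)"
    by (rule nonneg_infsum_complete) simp
  have "infsum f A + 0 < infsum f A + e" using S e by (subst ennreal_add_left_cancel_less) auto
  also have "infsum f A + e = (SUP F\<in>{F. finite F \<and> F \<subseteq> A}. sum f F + e)"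
    unfolding Seq by (rule ennreal_SUP_add_left[symmetric]) auto
  finally obtain F where F: "finite F" "F \<subseteq> A" "infsum f A < sum f F + e"
    by (auto simp: less_SUP_iff)
  obtain l0 where l0: "\<And>l. l \<ge> l0 \<Longrightarrow> Lv l \<inter> F = {}" using disj[OF F(1,2)] by blast
  show ?thesis
  proof (intro exI[of _ l0] allI impI)
    fix l assume l: "l \<ge> l0"
    have "sum f F + sum f (Lv l) = sum f (F \<union> Lv l)"
      using l0[OF l] F(1) fin[of l] by (simp add: sum.union_disjoint Int_commute)
    also have "\<dots> \<le> infsum f A" unfolding Seq
      using F(1,2) fin[of l] sub[of l] by (intro SUP_upper) auto
    also have "\<dots> < sum f F + e" by (rule F(3))
    finally have "sum f F + sum f (Lv l) < sum f F + e" .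
    then have "sum f (Lv l) < e" by (simp add: ennreal_add_left_cancel_less)
    then show "sum f (Lv l) \<le> e" by simp
  qed
qed

context gifs begin

lemma haus_N0:
  assumes q: "q > 0" and N: "r + 2 * s + k = 0" and A: "A \<subseteq> X"
  shows "hausdorff r s k F av q A = 0"
proof -
  have rsk: "r = 0" "s = 0" "k = 0" using N by auto
  have d0: "dX r s k F av x y = 0" for x y
  proof -
    obtain xr xc xp where x: "x = (xr, xc, xp)" by (cases x)
    obtain yr yc yp where y: "y = (yr, yc, yp)" by (cases y)
    show ?thesis unfolding dX_def x y using rsk by simp
  qed
  define U where "U j = (if j = 0 then A else {})" for j :: nat
  have "(INF U\<in>{U :: nat \<Rightarrow> 'a pt set. (\<forall>j. U j \<subseteq> Xset r s k F \<and> (\<forall>x\<in>U j. \<forall>y\<in>U j. dX r s k F av x y \<le> \<delta>)) \<and> A \<subseteq> (\<Union>j. U j)}.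
           (\<Sum>j. ennreal (diam_pow (dX r s k F av) (U j) q))) = 0" if d: "\<delta> > 0" for \<delta>
  proof -
    have Uin: "U \<in> {U :: nat \<Rightarrow> 'a pt set. (\<forall>j. U j \<subseteq> Xset r s k F \<and> (\<forall>x\<in>U j. \<forall>y\<in>U j. dX r s k F av x y \<le> \<delta>)) \<and> A \<subseteq> (\<Union>j. U j)}"
    proof (intro CollectI conjI allI)
      fix j
      show "U j \<subseteq> Xset r s k F" using A unfolding U_def by simp
      show "\<forall>x\<in>U j. \<forall>y\<in>U j. dX r s k F av x y \<le> \<delta>" using d by (simp add: d0)
    next
      show "A \<subseteq> (\<Union>j. U j)" unfolding U_def by (intro subsetI UN_I[of 0]) auto
    qed
    have "diam_pow (dX r s k F av) (U j) q = 0" for j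
    proof (cases "U j = {}")
      case False
      have "diam_set (dX r s k F av) (U j) = 0"
        using diam_bound[OF False, of "dX r s k F av" 0] d0 by simp
      then show ?thesis using False q by (simp add: diam_pow_def)
    qed (simp add: diam_pow_def)
    then have "(\<Sum>j. ennreal (diam_pow (dX r s k F av) (U j) q)) = 0" by simp
    then show ?thesis using Uin by (metis (no_types, lifting) INF_lower le_zero_eq)
  qed
  then show ?thesis unfolding hausdorff_def by simp
qed

lemma nu_zero:
  "nu r s k F av n G \<eta>0 0 A = \<infinity>"
proof -
  have "(\<Sum>i::nat. ennreal (Phi r s k av 0 (T_path r s k F (c i)))) = \<infinity>" for c :: "nat \<Rightarrow> 'a edge list"
  proof -
    have "(\<Sum>i::nat. ennreal (Phi r s k av 0 (T_path r s k F (c i)))) = (\<Sum>i::nat. 1)" by (simp add: Phi_def)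
    also have "\<dots> = \<infinity>"
    proof -
      have le: "of_nat m \<le> (\<Sum>i::nat. 1::ennreal)" for m
      proof -
        have "(\<Sum>i<m. 1::ennreal) \<le> (\<Sum>i::nat. 1::ennreal)" by (rule sum_le_suminf) auto
        then show ?thesis by simp
      qed
      show ?thesis
      proof (rule ccontr)
        assume "(\<Sum>i::nat. 1::ennreal) \<noteq> \<infinity>"
        then have "(\<Sum>i::nat. 1::ennreal) < \<infinity>" by (simp add: top.not_eq_extremum)
        then obtain m where "(\<Sum>i::nat. 1::ennreal) < of_nat m" using ennreal_Ex_less_of_nat[of "\<Sum>i::nat. 1::ennreal"] by (auto simp: infinity_ennreal_def)
        then show False using le[of m] by simp
      qed
    qed
    finally show ?thesis .
  qed
  then show ?thesis unfolding nu_def by (simp add: top_unique)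
qed

end

context gifs begin

lemma Lv_finite: "finite {w\<in>Efin n G. length w = l}"
proof -
  have "{w\<in>Efin n G. length w = l} \<subseteq> {w. set w \<subseteq> E \<and> length w = l}" unfolding Efin_def by auto
  moreover have "finite {w. set w \<subseteq> E \<and> length w = l}" using edges_fin by (rule finite_lists_length_eq)
  ultimately show ?thesis by (rule finite_subset)
qed

lemma haus_zero:
  assumes q: "q > 0" and N: "r + 2 * s + k > 0" and i: "i < n"
    and S: "(\<Sum>\<^sub>\<infinity>w\<in>Efin n G. ennreal (Phi r s k av q (T_path r s k F w))) < \<infinity>"
  shows "hausdorff r s k F av q (\<Omega> i) = 0"
proof -
  obtain C where C0: "C \<ge> 0" and HB: "\<forall>\<delta>>0. \<exists>L. \<forall>(p::nat \<Rightarrow> 'a edge list) (c::nat \<Rightarrow> 'a edge list) (B::ennreal).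
     (\<forall>m. p m \<noteq> [] \<longrightarrow> p m \<in> Efin n G \<and> L \<le> length (p m) \<and> (\<exists>u. p m = c m @ u))
     \<longrightarrow> \<Omega> i \<subseteq> (\<Union>m\<in>{m. p m \<noteq> []}. aff_path k F (p m) ` \<Omega> (etgt (last (p m))))
     \<longrightarrow> (\<Sum>m. if p m = [] then 0 else ennreal (Phi r s k av q (T_path r s k F (c m)))) \<le> B
     \<longrightarrow> (INF U\<in>{U :: nat \<Rightarrow> 'a pt set. (\<forall>j. U j \<subseteq> Xset r s k F \<and> (\<forall>x\<in>U j. \<forall>y\<in>U j. dX r s k F av x y \<le> \<delta>)) \<and> \<Omega> i \<subseteq> (\<Union>j. U j)}.
           (\<Sum>j. ennreal (diam_pow (dX r s k F av) (U j) q))) \<le> ennreal C * B"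
    using haus_bound[OF q N i] by blast
  define f where "f w = ennreal (Phi r s k av q (T_path r s k F w))" for w
  define Lv where "Lv l = {w\<in>Efin n G. length w = l}" for l
  have INF0: "(INF U\<in>{U :: nat \<Rightarrow> 'a pt set. (\<forall>j. U j \<subseteq> Xset r s k F \<and> (\<forall>x\<in>U j. \<forall>y\<in>U j. dX r s k F av x y \<le> \<delta>)) \<and> \<Omega> i \<subseteq> (\<Union>j. U j)}.
           (\<Sum>j. ennreal (diam_pow (dX r s k F av) (U j) q))) \<le> 0" if d: "\<delta> > 0" for \<delta>
  proof -
    obtain L where L: "\<forall>(p::nat \<Rightarrow> 'a edge list) (c::nat \<Rightarrow> 'a edge list) (B::ennreal).
     (\<forall>m. p m \<noteq> [] \<longrightarrow> p m \<in> Efin n G \<and> L \<le> length (p m) \<and> (\<exists>u. p m = c m @ u))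
     \<longrightarrow> \<Omega> i \<subseteq> (\<Union>m\<in>{m. p m \<noteq> []}. aff_path k F (p m) ` \<Omega> (etgt (last (p m))))
     \<longrightarrow> (\<Sum>m. if p m = [] then 0 else ennreal (Phi r s k av q (T_path r s k F (c m)))) \<le> B
     \<longrightarrow> (INF U\<in>{U :: nat \<Rightarrow> 'a pt set. (\<forall>j. U j \<subseteq> Xset r s k F \<and> (\<forall>x\<in>U j. \<forall>y\<in>U j. dX r s k F av x y \<le> \<delta>)) \<and> \<Omega> i \<subseteq> (\<Union>j. U j)}.
           (\<Sum>j. ennreal (diam_pow (dX r s k F av) (U j) q))) \<le> ennreal C * B"
      using HB d by blast
    show ?thesis
    proof (rule ennreal_le_epsilon)
      fix e :: real assume e: "0 < e"
      define e' where "e' = e / (C + 1)"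
      have e'0: "e' > 0" unfolding e'_def using e C0 by simp
      have Ce: "C * e' \<le> e" unfolding e'_def using e C0 by (simp add: field_simps)
      obtain l0 where l0: "\<And>l. l \<ge> l0 \<Longrightarrow> sum f (Lv l) \<le> ennreal e'"
      proof -
        have "\<exists>l0. \<forall>l\<ge>l0. sum f (Lv l) \<le> ennreal e'"
        proof (rule small_level[of f "Efin n G"])
          show "infsum f (Efin n G) < \<infinity>" using S unfolding f_def .
          show "0 < ennreal e'" using e'0 by simp
          show "finite (Lv l)" for l unfolding Lv_def by (rule Lv_finite)
          show "Lv l \<subseteq> Efin n G" for l unfolding Lv_def by auto
          fix Fs assume Fs: "finite Fs" "Fs \<subseteq> Efin n G"
          show "\<exists>l0. \<forall>l\<ge>l0. Lv l \<inter> Fs = {}"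
          proof (intro exI[of _ "Suc (Max (insert 0 (length ` Fs)))"] allI impI)
            fix l assume l: "Suc (Max (insert 0 (length ` Fs))) \<le> l"
            have "length w < l" if "w \<in> Fs" for w
            proof -
              have "length w \<le> Max (insert 0 (length ` Fs))" using Fs(1) that by (intro Max_ge) auto
              then show ?thesis using l by simp
            qed
            then show "Lv l \<inter> Fs = {}" unfolding Lv_def by auto
          qed
        qed
        then show ?thesis using that by blast
      qed
      define l where "l = max l0 (max L 1)"
      have ll: "l \<ge> l0" "l \<ge> L" "l \<ge> 1" unfolding l_def by auto
      obtain ws where ws: "set ws = Lv l" "distinct ws" using finite_distinct_list[OF Lv_finite[of l]] unfolding Lv_def by blast
      define p where "p m = (if m < length ws then ws ! m else [])" for m
      have wsp: "ws ! m \<in> Efin n G \<and> length (ws ! m) = l" if "m < length ws" for m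
        using ws that nth_mem[OF that] unfolding Lv_def by auto
      have pne: "p m \<noteq> [] \<longleftrightarrow> m < length ws" for m
      proof
        assume "m < length ws"
        then have "length (ws ! m) = l" using wsp by blast
        then show "p m \<noteq> []" using \<open>m < length ws\<close> ll(3) unfolding p_def by auto
      qed (auto simp: p_def split: if_splits)
      have P1: "\<forall>m. p m \<noteq> [] \<longrightarrow> p m \<in> Efin n G \<and> L \<le> length (p m) \<and> (\<exists>u. p m = p m @ u)"
        using wsp ll pne unfolding p_def by auto
      have P2: "\<Omega> i \<subseteq> (\<Union>m\<in>{m. p m \<noteq> []}. aff_path k F (p m) ` \<Omega> (etgt (last (p m))))"
      proof
        fix x assume x: "x \<in> \<Omega> i"
        obtain w y where w: "w \<in> Efin n G" "length w = l" "y \<in> \<Omega> (endv i w)" "x = aff_path k F w y"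
          using cover_paths[OF i x, of l] by blast
        have wne: "w \<noteq> []" using w(2) ll(3) by auto
        have "w \<in> set ws" using ws w unfolding Lv_def by auto
        then obtain m where m: "m < length ws" "ws ! m = w" by (auto simp: in_set_conv_nth)
        have "p m = w" using m unfolding p_def by simp
        then show "x \<in> (\<Union>m\<in>{m. p m \<noteq> []}. aff_path k F (p m) ` \<Omega> (etgt (last (p m))))"
          using w wne by (intro UN_I[of m]) (auto simp: endv_def)
      qed
      have P3: "(\<Sum>m. if p m = [] then 0 else ennreal (Phi r s k av q (T_path r s k F (p m)))) \<le> ennreal e'"
      proof -
        have "(\<Sum>m. if p m = [] then 0 else ennreal (Phi r s k av q (T_path r s k F (p m)))) = (\<Sum>m<length ws. f (ws ! m))"
        proof (subst suminf_finite[of "{..<length ws}"])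
          show "finite {..<length ws}" by simp
          show "\<And>m. m \<notin> {..<length ws} \<Longrightarrow> (if p m = [] then 0 else ennreal (Phi r s k av q (T_path r s k F (p m)))) = 0"
            using pne by auto
          show "(\<Sum>m<length ws. if p m = [] then 0 else ennreal (Phi r s k av q (T_path r s k F (p m)))) = (\<Sum>m<length ws. f (ws ! m))"
          proof (rule sum.cong)
            fix m assume "m \<in> {..<length ws}"
            then have m: "m < length ws" by simp
            then have "p m \<noteq> []" "p m = ws ! m" using pne[of m] unfolding p_def by auto
            then show "(if p m = [] then 0 else ennreal (Phi r s k av q (T_path r s k F (p m)))) = f (ws ! m)"
              unfolding f_def by simp
          qed simp
        qed
        also have "\<dots> = sum f (set ws)"
          using ws(2) by (simp add: sum_list_distinct_conv_sum_set[symmetric] sum_list_sum_nth lessThan_atLeast0)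
        also have "\<dots> \<le> ennreal e'" using l0[OF ll(1)] ws(1) by simp
        finally show ?thesis .
      qed
      have "(INF U\<in>{U :: nat \<Rightarrow> 'a pt set. (\<forall>j. U j \<subseteq> Xset r s k F \<and> (\<forall>x\<in>U j. \<forall>y\<in>U j. dX r s k F av x y \<le> \<delta>)) \<and> \<Omega> i \<subseteq> (\<Union>j. U j)}.
           (\<Sum>j. ennreal (diam_pow (dX r s k F av) (U j) q))) \<le> ennreal C * ennreal e'"
        using L P1 P2 P3 by blast
      also have "\<dots> = ennreal (C * e')" using C0 by (simp add: ennreal_mult')
      also have "\<dots> \<le> ennreal e" using Ce by (rule ennreal_leI)
      finally show "(INF U\<in>{U :: nat \<Rightarrow> 'a pt set. (\<forall>j. U j \<subseteq> Xset r s k F \<and> (\<forall>x\<in>U j. \<forall>y\<in>U j. dX r s k F av x y \<le> \<delta>)) \<and> \<Omega> i \<subseteq> (\<Union>j. U j)}.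
           (\<Sum>j. ennreal (diam_pow (dX r s k F av) (U j) q))) \<le> 0 + ennreal e" by simp
    qed
  qed
  show ?thesis unfolding hausdorff_def using INF0 by (simp add: SUP_least le_zero_eq)
qed

end

lemma dE_le1: "\<eta>0 > 1 \<Longrightarrow> dE \<eta>0 x y \<le> 1"
  unfolding dE_def by (auto simp: powr_minus_divide ge_one_powr_ge_zero)

lemma dE_le_diam:
  assumes "\<eta>0 > 1" "x \<in> S" "y \<in> S"
  shows "dE \<eta>0 x y \<le> diam_set (dE \<eta>0) S"
proof -
  have bdd: "bdd_above {dE \<eta>0 x y | x y. x \<in> S \<and> y \<in> S}" using dE_le1[OF assms(1)] by (auto intro!: bdd_aboveI)
  have "dE \<eta>0 x y \<le> Sup {dE \<eta>0 x y | x y. x \<in> S \<and> y \<in> S}" using assms by (intro cSup_upper[OF _ bdd]) blast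
  then show ?thesis using assms unfolding diam_set_def by auto
qed

lemma cyl_agree:
  assumes eta: "\<eta>0 > 1" and w: "\<omega> \<in> cyl n G c" and w': "\<omega>' \<in> cyl n G c"
    and dm: "diam_set (dE \<eta>0) (cyl n G c) \<le> \<eta>0 powr (- real L)" and j: "j < max (length c) L"
  shows "\<omega> j = \<omega>' j"
proof (cases "j < length c")
  case True then show ?thesis using w w' unfolding cyl_def by auto
next
  case False
  then have jL: "j < L" using j by simp
  show ?thesis
  proof (rule ccontr)
    assume ne: "\<omega> j \<noteq> \<omega>' j"
    then have neq: "\<omega> \<noteq> \<omega>'" by auto
    define m where "m = (LEAST t. \<omega> t \<noteq> \<omega>' t)"
    have mj: "m \<le> j" unfolding m_def using ne by (rule Least_le)
    have "\<eta>0 powr (- real m) = dE \<eta>0 \<omega> \<omega>'" using neq unfolding dE_def m_def by simp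
    also have "\<dots> \<le> \<eta>0 powr (- real L)" using dE_le_diam[OF eta w w'] dm by linarith
    finally have "- real m \<le> - real L" using eta by simp
    then show False using mj jL by simp
  qed
qed

context gifs begin

lemma haus_fin:
  assumes q: "q > 0" and N: "r + 2 * s + k > 0" and i: "i < n" and eta: "\<eta>0 > 1"
    and nuf: "nu r s k F av n G \<eta>0 q (Einf n G) < \<infinity>"
  shows "hausdorff r s k F av q (\<Omega> i) < \<infinity>"
proof -
  obtain C where C0: "C \<ge> 0" and HB: "\<forall>\<delta>>0. \<exists>L. \<forall>(p::nat \<Rightarrow> 'a edge list) (c::nat \<Rightarrow> 'a edge list) (B::ennreal).
     (\<forall>m. p m \<noteq> [] \<longrightarrow> p m \<in> Efin n G \<and> L \<le> length (p m) \<and> (\<exists>u. p m = c m @ u))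
     \<longrightarrow> \<Omega> i \<subseteq> (\<Union>m\<in>{m. p m \<noteq> []}. aff_path k F (p m) ` \<Omega> (etgt (last (p m))))
     \<longrightarrow> (\<Sum>m. if p m = [] then 0 else ennreal (Phi r s k av q (T_path r s k F (c m)))) \<le> B
     \<longrightarrow> (INF U\<in>{U :: nat \<Rightarrow> 'a pt set. (\<forall>j. U j \<subseteq> Xset r s k F \<and> (\<forall>x\<in>U j. \<forall>y\<in>U j. dX r s k F av x y \<le> \<delta>)) \<and> \<Omega> i \<subseteq> (\<Union>j. U j)}.
           (\<Sum>j. ennreal (diam_pow (dX r s k F av) (U j) q))) \<le> ennreal C * B"
    using haus_bound[OF q N i] by blast
  define \<nu> where "\<nu> = nu r s k F av n G \<eta>0 q (Einf n G)"
  define B where "B = \<nu> + 1"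
  have Bfin: "B < \<infinity>" using nuf unfolding B_def \<nu>_def by simp
  have nuB: "\<nu> < B" using nuf unfolding B_def \<nu>_def by (simp add: ennreal_add_left_cancel_less[of _ 0, simplified])
  have INFb: "(INF U\<in>{U :: nat \<Rightarrow> 'a pt set. (\<forall>j. U j \<subseteq> Xset r s k F \<and> (\<forall>x\<in>U j. \<forall>y\<in>U j. dX r s k F av x y \<le> \<delta>)) \<and> \<Omega> i \<subseteq> (\<Union>j. U j)}.
           (\<Sum>j. ennreal (diam_pow (dX r s k F av) (U j) q))) \<le> ennreal C * B" if d: "\<delta> > 0" for \<delta>
  proof -
    obtain L where L: "\<forall>(p::nat \<Rightarrow> 'a edge list) (c::nat \<Rightarrow> 'a edge list) (B::ennreal).
     (\<forall>m. p m \<noteq> [] \<longrightarrow> p m \<in> Efin n G \<and> L \<le> length (p m) \<and> (\<exists>u. p m = c m @ u))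
     \<longrightarrow> \<Omega> i \<subseteq> (\<Union>m\<in>{m. p m \<noteq> []}. aff_path k F (p m) ` \<Omega> (etgt (last (p m))))
     \<longrightarrow> (\<Sum>m. if p m = [] then 0 else ennreal (Phi r s k av q (T_path r s k F (c m)))) \<le> B
     \<longrightarrow> (INF U\<in>{U :: nat \<Rightarrow> 'a pt set. (\<forall>j. U j \<subseteq> Xset r s k F \<and> (\<forall>x\<in>U j. \<forall>y\<in>U j. dX r s k F av x y \<le> \<delta>)) \<and> \<Omega> i \<subseteq> (\<Union>j. U j)}.
           (\<Sum>j. ennreal (diam_pow (dX r s k F av) (U j) q))) \<le> ennreal C * B"
      using HB d by blast
    define L' where "L' = Suc L"
    define \<delta>' where "\<delta>' = \<eta>0 powr (- real L')"
    have d': "\<delta>' > 0" unfolding \<delta>'_def using eta by simp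
    define CS where "CS = {c :: nat \<Rightarrow> 'a edge list.
          (\<forall>i. c i \<in> Efin n G \<and> diam_set (dE \<eta>0) (cyl n G (c i)) \<le> \<delta>') \<and> Einf n G \<subseteq> (\<Union>i. cyl n G (c i))}"
    have "(INF c\<in>CS. (\<Sum>i. ennreal (Phi r s k av q (T_path r s k F (c i))))) \<le> \<nu>"
      unfolding \<nu>_def nu_def CS_def using d' by (intro SUP_upper) auto
    then have "(INF c\<in>CS. (\<Sum>i. ennreal (Phi r s k av q (T_path r s k F (c i))))) < B" using nuB by simp
    then obtain c where cCS: "c \<in> CS" and cB: "(\<Sum>i. ennreal (Phi r s k av q (T_path r s k F (c i)))) < B"
      by (auto simp: INF_less_iff)
    have cE: "c m \<in> Efin n G" and cd: "diam_set (dE \<eta>0) (cyl n G (c m)) \<le> \<delta>'" for m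
      using cCS unfolding CS_def by auto
    have ccov: "Einf n G \<subseteq> (\<Union>m. cyl n G (c m))" using cCS unfolding CS_def by auto
    define l where "l m = max (length (c m)) L'" for m
    define \<omega> where "\<omega> m = (SOME w. w \<in> cyl n G (c m))" for m
    define p where "p m = (if cyl n G (c m) = {} then [] else map (\<omega> m) [0..<l m])" for m
    have \<omega>c: "\<omega> m \<in> cyl n G (c m)" if "cyl n G (c m) \<noteq> {}" for m
      unfolding \<omega>_def using that by (simp add: some_in_eq)
    have lpos: "l m > 0" for m unfolding l_def L'_def by simp
    have agree: "map w [0..<l m] = p m" if w: "w \<in> cyl n G (c m)" for w m
    proof -
      have ne: "cyl n G (c m) \<noteq> {}" using w by blast
      have "w j = \<omega> m j" if "j < l m" for j
        using cyl_agree[OF eta w \<omega>c[OF ne] cd[unfolded \<delta>'_def]] that unfolding l_def by blast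
      then show ?thesis unfolding p_def using ne by simp
    qed
    have P1: "\<forall>m. p m \<noteq> [] \<longrightarrow> p m \<in> Efin n G \<and> L \<le> length (p m) \<and> (\<exists>u. p m = c m @ u)"
    proof (intro allI impI conjI)
      fix m assume pne: "p m \<noteq> []"
      then have ne: "cyl n G (c m) \<noteq> {}" unfolding p_def by auto
      have w: "\<omega> m \<in> cyl n G (c m)" using \<omega>c[OF ne] .
      then have wE: "\<omega> m \<in> Einf n G" unfolding cyl_def by simp
      have pm: "p m = map (\<omega> m) [0..<l m]" unfolding p_def using ne by simp
      show "p m \<in> Efin n G" unfolding pm Efin_def using wE unfolding Einf_def by auto
      show "L \<le> length (p m)" unfolding pm l_def L'_def by simp
      have tk: "take (length (c m)) (p m) = c m"
      proof (rule nth_equalityI)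
        show "length (take (length (c m)) (p m)) = length (c m)" unfolding pm l_def by simp
        fix j assume "j < length (take (length (c m)) (p m))"
        then have j: "j < length (c m)" by simp
        then show "take (length (c m)) (p m) ! j = c m ! j"
          using w unfolding pm cyl_def l_def by simp
      qed
      show "\<exists>u. p m = c m @ u" using tk by (metis append_take_drop_id)
    qed
    have P2: "\<Omega> i \<subseteq> (\<Union>m\<in>{m. p m \<noteq> []}. aff_path k F (p m) ` \<Omega> (etgt (last (p m))))"
    proof
      fix x assume x: "x \<in> \<Omega> i"
      obtain w where wE: "w \<in> Einf n G" and wrep: "\<forall>l>0. \<exists>y\<in>\<Omega> (etgt (w (l - 1))). x = aff_path k F (map w [0..<l]) y"
        using coding[OF i x] by blast
      obtain m where m: "w \<in> cyl n G (c m)" using ccov wE by blast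
      have pm: "p m = map w [0..<l m]" using agree[OF m] by simp
      have pne: "p m \<noteq> []" using pm lpos[of m] by simp
      obtain y where y: "y \<in> \<Omega> (etgt (w (l m - 1)))" "x = aff_path k F (map w [0..<l m]) y"
        using wrep lpos[of m] by blast
      have "last (p m) = w (l m - 1)" unfolding pm using lpos[of m] by (simp add: last_map)
      then show "x \<in> (\<Union>m\<in>{m. p m \<noteq> []}. aff_path k F (p m) ` \<Omega> (etgt (last (p m))))"
        using y pne pm by (intro UN_I[of m]) auto
    qed
    have P3: "(\<Sum>m. if p m = [] then 0 else ennreal (Phi r s k av q (T_path r s k F (c m)))) \<le> B"
    proof -
      have "(\<Sum>m. if p m = [] then 0 else ennreal (Phi r s k av q (T_path r s k F (c m)))) \<le> (\<Sum>m. ennreal (Phi r s k av q (T_path r s k F (c m))))"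
        by (rule suminf_le) auto
      then show ?thesis using cB by simp
    qed
    show ?thesis using L P1 P2 P3 by blast
  qed
  have "hausdorff r s k F av q (\<Omega> i) \<le> ennreal C * B"
    unfolding hausdorff_def using INFb by (intro SUP_least) auto
  also have "ennreal C * B < \<infinity>" using Bfin by (simp add: ennreal_mult_less_top)
  finally show ?thesis .
qed

end

context gifs begin

lemma Efin_infinite:
  assumes i: "i < n"
  shows "infinite (Efin n G)"
proof
  assume fin: "finite (Efin n G)"
  obtain x where x: "x \<in> \<Omega> i" using nonempty i by blast
  define M where "M = Max (insert 0 (length ` Efin n G))"
  obtain w y where w: "w \<in> Efin n G" "length w = Suc M" using cover_paths[OF i x, of "Suc M"] by blast
  have "length w \<le> M" unfolding M_def using fin w(1) by (intro Max_ge) auto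
  then show False using w(2) by simp
qed

lemma Phi_zero: "Phi r s k av 0 a = 1" by (simp add: Phi_def)

end

theorem mainTheorem3:
  fixes r s k n :: nat
    and F :: "nat \<Rightarrow> 'a ring" and av :: "nat \<Rightarrow> 'a \<Rightarrow> real"
    and G :: "nat \<Rightarrow> nat \<Rightarrow> ('a pt \<times> 'a pt) set"
    and \<Omega> :: "nat \<Rightarrow> 'a pt set"
    and \<eta>0 :: real
  assumes padic: "\<forall>j<k. is_padic_completion (F j) (av j)"
    and fin: "\<forall>i<n. \<forall>j<n. finite (G i j)"
    and maps: "\<forall>i<n. \<forall>j<n. \<forall>f\<in>G i j. lin_ok r s k F av (fst f) \<and> snd f \<in> Xset r s k F"
    and nonempty: "\<forall>i<n. \<Omega> i \<noteq> {}"
    and compact: "\<forall>i<n. dcompact r s k F av (\<Omega> i)"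
    and solution: "\<forall>i<n. \<Omega> i = (\<Union>j<n. \<Union>f\<in>G i j. aff_apply k F f ` \<Omega> j)"
    and eta0: "\<eta>0 > 1"
  shows "(\<forall>q\<ge>0. nu r s k F av n G \<eta>0 q (Einf n G) < \<infinity>
                 \<longrightarrow> (\<forall>i<n. hausdorff r s k F av q (\<Omega> i) < \<infinity>))
       \<and> (strongly_connected n G
                 \<longrightarrow> (\<forall>i<n. dim_Hd r s k F av (\<Omega> i) \<le> dim_aff r s k F av n G))"
proof -
  interpret gifs r s k n F av G \<Omega>
    using padic fin maps nonempty compact solution by unfold_locales
  have part1: "hausdorff r s k F av q (\<Omega> i) < \<infinity>"
    if q: "q \<ge> 0" and nf: "nu r s k F av n G \<eta>0 q (Einf n G) < \<infinity>" and i: "i < n" for q i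
  proof (cases "q = 0")
    case True
    then show ?thesis using nf nu_zero by simp
  next
    case False
    then have qp: "q > 0" using q by simp
    show ?thesis
    proof (cases "r + 2 * s + k = 0")
      case True
      have "\<Omega> i \<subseteq> Xset r s k F" using compact i unfolding dcompact_def by blast
      then show ?thesis using haus_N0[OF qp True] by simp
    next
      case False
      then show ?thesis using haus_fin[OF qp _ i eta0 nf] by simp
    qed
  qed
  have part2: "dim_Hd r s k F av (\<Omega> i) \<le> dim_aff r s k F av n G" if i: "i < n" for i
  proof -
    have sub: "{ereal q | q. q \<ge> 0 \<and> (\<Sum>\<^sub>\<infinity>w\<in>Efin n G. ennreal (Phi r s k av q (T_path r s k F w))) < \<infinity>}
             \<subseteq> {ereal q | q. q \<ge> 0 \<and> hausdorff r s k F av q (\<Omega> i) = 0}"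
    proof
      fix z assume "z \<in> {ereal q | q. q \<ge> 0 \<and> (\<Sum>\<^sub>\<infinity>w\<in>Efin n G. ennreal (Phi r s k av q (T_path r s k F w))) < \<infinity>}"
      then obtain q where z: "z = ereal q" and q: "q \<ge> 0"
        and S: "(\<Sum>\<^sub>\<infinity>w\<in>Efin n G. ennreal (Phi r s k av q (T_path r s k F w))) < \<infinity>" by blast
      have qp: "q > 0"
      proof (rule ccontr)
        assume "\<not> q > 0"
        then have q0: "q = 0" using q by simp
        have "(\<Sum>\<^sub>\<infinity>w\<in>Efin n G. ennreal (Phi r s k av q (T_path r s k F w))) = \<infinity>"
          unfolding q0 Phi_zero by (rule infsum_superconst_infinite_ennreal[where b=1]) (use Efin_infinite[OF i] in auto)
        then show False using S by simp
      qed
      have "hausdorff r s k F av q (\<Omega> i) = 0"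
      proof (cases "r + 2 * s + k = 0")
        case True
        have "\<Omega> i \<subseteq> Xset r s k F" using compact i unfolding dcompact_def by blast
        then show ?thesis using haus_N0[OF qp True] by simp
      next
        case False
        then show ?thesis using haus_zero[OF qp _ i S] by simp
      qed
      then show "z \<in> {ereal q | q. q \<ge> 0 \<and> hausdorff r s k F av q (\<Omega> i) = 0}" using z q by blast
    qed
    show ?thesis unfolding dim_Hd_def dim_aff_def by (rule Inf_superset_mono[OF sub])
  qed
  show ?thesis using part1 part2 by blast
qed

end
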